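(* Let $H=(H,\Delta,\epsilon,\phi,S,\alpha,\beta)$ be a quasi-Hopf algebra over a field $k$, and let $K\subseteq H$ be a finite-dimensional subquasibialgebra (a subalgebra with $\Delta(K)\subseteq K\otimes K$ and $\phi\in K\otimes K\otimes K$) such that $$S(\phi^{(-1)})\alpha\phi^{(-2)}\otimes\phi^{(-3)}\in K\otimes K.$$ Then $\alpha,\beta\in K$ and $S(K)\subseteq K$, so $K$ is a quasi-Hopf subalgebra of $H$ (with quasi-antipode the restriction of $(S,\alpha,\beta)$).
   Context: A quasibialgebra $(H,\Delta,\epsilon,\phi)$ over a field $k$ consists of an algebra $H$, algebra maps $\Delta\colon H\to H\otimes H$, $h\mapsto h_{(1)}\otimes h_{(2)}$, and $\epsilon\colon H\to k$, and an invertible $\phi=\phi^{(1)}\otimes\phi^{(2)}\otimes\phi^{(3)}\in H^{\otimes 3}$ (with $\phi^{-1}=\phi^{(-1)}\otimes\phi^{(-2)}\otimes\phi^{(-3)}$) such that $(\epsilon\otimes H)\Delta(h)=h=(H\otimes\epsilon)\Delta(h)$; $(H\otimes\Delta)\Delta(h)\,\phi=\phi\,(\Delta\otimes H)\Delta(h)$; $(H\otimes H\otimes\Delta)(\phi)(\Delta\otimes H\otimes H)(\phi)=(1\otimes\phi)(H\otimes\Delta\otimes H)(\phi)(\phi\otimes 1)$; and $(H\otimes\epsilon\otimes H)(\phi)=1$. A quasi-antipode is a triple $(S,\alpha,\beta)$ with $\alpha,\beta\in H$ and $S$ an anti-algebra endomorphism of $H$ (not required to be bijective) such that for all $h\in H$: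 $S(h_{(1)})\alpha h_{(2)}=\epsilon(h)\alpha$, $h_{(1)}\beta S(h_{(2)})=\epsilon(h)\beta$, $\phi^{(1)}\beta S(\phi^{(2)})\alpha\phi^{(3)}=1$, $S(\phi^{(-1)})\alpha\phi^{(-2)}\beta S(\phi^{(-3)})=1$. A quasi-Hopf algebra is a quasibialgebra with a quasi-antipode. A quasi-Hopf subalgebra is a subquasibialgebra $K$ with $S(K)\subseteq K$ and $\alpha,\beta\in K$. *)

theory Defs
  imports "HOL-Library.Poly_Mapping"
begin

(* 
  The underlying vector space of the algebra H over the field 'k is
  presented by a basis indexed by the type 'b, i.e. H = ('b =>0 'k)
  (finitely supported coordinate functions).  Every vector space over a field has
  a basis, so this is no loss of generality.  Elements of the tensor powers
  H^(tensor n) are represented as ('b list =>0 'k), supported on words of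
  length n: the basis of H^(tensor n) is given by the elementary tensors
  e_(i1) (x) ... (x) e_(in), indexed by the word [i1,...,in].
 *)

type_synonym ('b,'k) hvec = "'b \<Rightarrow>\<^sub>0 'k"
type_synonym ('b,'k) tens = "'b list \<Rightarrow>\<^sub>0 'k"

definition sc :: "'k::field \<Rightarrow> ('c \<Rightarrow>\<^sub>0 'k) \<Rightarrow> ('c \<Rightarrow>\<^sub>0 'k)" where
  "sc c p = Poly_Mapping.map (\<lambda>x. c * x) p"

definition bv :: "'b \<Rightarrow> ('b,'k::field) hvec" where
  "bv i = Poly_Mapping.single i 1"

definition lin_ext :: "('b list \<Rightarrow> ('c \<Rightarrow>\<^sub>0 'k::field)) \<Rightarrow> ('b,'k) tens \<Rightarrow> ('c \<Rightarrow>\<^sub>0 'k)" where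
  "lin_ext g x = (\<Sum>u\<in>Poly_Mapping.keys x. sc (Poly_Mapping.lookup x u) (g u))"

definition vec :: "('b,'k::field) hvec \<Rightarrow> ('b,'k) tens" where
  "vec a = (\<Sum>i\<in>Poly_Mapping.keys a. Poly_Mapping.single [i] (Poly_Mapping.lookup a i))"

(* tensor product H^(tensor m) x H^(tensor n) \<rightarrow> H^(tensor (m+n)); k = H^(tensor 0) *)
definition tens :: "('b,'k::field) tens \<Rightarrow> ('b,'k) tens \<Rightarrow> ('b,'k) tens" where
  "tens x y = (\<Sum>u\<in>Poly_Mapping.keys x. \<Sum>v\<in>Poly_Mapping.keys y. Poly_Mapping.single (u @ v) (Poly_Mapping.lookup x u * Poly_Mapping.lookup y v))"

definition tunit :: "('b,'k::field) tens" where
  "tunit = Poly_Mapping.single [] 1"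

definition tprod :: "('b,'k::field) hvec list \<Rightarrow> ('b,'k) tens" where
  "tprod as = foldr (\<lambda>a t. tens (vec a) t) as tunit"

definition in_tpow :: "nat \<Rightarrow> ('b,'k::field) tens \<Rightarrow> bool" where
  "in_tpow n x \<longleftrightarrow> (\<forall>u\<in>Poly_Mapping.keys x. length u = n)"

(* componentwise multiplication in H^(tensor n) *)
definition mulT :: "(('b,'k::field) hvec \<Rightarrow> ('b,'k) hvec \<Rightarrow> ('b,'k) hvec)
    \<Rightarrow> ('b,'k) tens \<Rightarrow> ('b,'k) tens \<Rightarrow> ('b,'k) tens" where
  "mulT mult x y = lin_ext (\<lambda>u. lin_ext (\<lambda>v. tprod (map2 mult (map bv u) (map bv v))) y) x"

(* tensor product of linear maps f1 (x) ... (x) fn, fi : H \<rightarrow> H^(tensor mi) *)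
definition tmap :: "(('b,'k::field) hvec \<Rightarrow> ('b,'k) tens) list \<Rightarrow> ('b,'k) tens \<Rightarrow> ('b,'k) tens" where
  "tmap fs x = lin_ext (\<lambda>u. foldr tens (map2 (\<lambda>f i. f (bv i)) fs u) tunit) x"

definition lspan :: "('c \<Rightarrow>\<^sub>0 'k::field) set \<Rightarrow> ('c \<Rightarrow>\<^sub>0 'k) set" where
  "lspan F = {(\<Sum>i<m. sc (c i) (f i)) | (m::nat) c f. \<forall>i<m. f i \<in> F}"

definition tpow :: "('b,'k::field) hvec set \<Rightarrow> nat \<Rightarrow> ('b,'k) tens set" where
  "tpow K n = lspan {tprod as | as. set as \<subseteq> K \<and> length as = n}"

definition linear_map :: "(('b \<Rightarrow>\<^sub>0 'k::field) \<Rightarrow> ('c \<Rightarrow>\<^sub>0 'k)) \<Rightarrow> bool" where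
  "linear_map f \<longleftrightarrow> (\<forall>a b. f (a + b) = f a + f b) \<and> (\<forall>c a. f (sc c a) = sc c (f a))"

definition linear_functional :: "(('b \<Rightarrow>\<^sub>0 'k::field) \<Rightarrow> 'k) \<Rightarrow> bool" where
  "linear_functional f \<longleftrightarrow> (\<forall>a b. f (a + b) = f a + f b) \<and> (\<forall>c a. f (sc c a) = c * f a)"

definition k_algebra :: "(('b,'k::field) hvec \<Rightarrow> ('b,'k) hvec \<Rightarrow> ('b,'k) hvec) \<Rightarrow> ('b,'k) hvec \<Rightarrow> bool" where
  "k_algebra mult one \<longleftrightarrow>
     (\<forall>a. linear_map (mult a)) \<and> (\<forall>b. linear_map (\<lambda>a. mult a b)) \<and>
     (\<forall>a b c. mult (mult a b) c = mult a (mult b c)) \<and>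
     (\<forall>a. mult one a = a \<and> mult a one = a)"

definition quasibialgebra ::
  "(('b,'k::field) hvec \<Rightarrow> ('b,'k) hvec \<Rightarrow> ('b,'k) hvec) \<Rightarrow> ('b,'k) hvec
   \<Rightarrow> (('b,'k) hvec \<Rightarrow> ('b,'k) tens) \<Rightarrow> (('b,'k) hvec \<Rightarrow> 'k)
   \<Rightarrow> ('b,'k) tens \<Rightarrow> ('b,'k) tens \<Rightarrow> bool" where
  "quasibialgebra mult one Delta eps phi phinv \<longleftrightarrow>
     k_algebra mult one \<and>
     \<comment> \<open>Delta : H \<rightarrow> H (x) H is an algebra map\<close>
     linear_map Delta \<and> (\<forall>h. in_tpow 2 (Delta h)) \<and>
     (\<forall>a b. Delta (mult a b) = mulT mult (Delta a) (Delta b)) \<and>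
     Delta one = tprod [one, one] \<and>
     \<comment> \<open>eps : H \<rightarrow> k is an algebra map\<close>
     linear_functional eps \<and>
     (\<forall>a b. eps (mult a b) = eps a * eps b) \<and> eps one = 1 \<and>
     \<comment> \<open>phi invertible in H (x) H (x) H\<close>
     in_tpow 3 phi \<and> in_tpow 3 phinv \<and>
     mulT mult phi phinv = tprod [one, one, one] \<and>
     mulT mult phinv phi = tprod [one, one, one] \<and>
     \<comment> \<open>counit axioms\<close>
     (\<forall>h. tmap [\<lambda>a. Poly_Mapping.single [] (eps a), vec] (Delta h) = vec h) \<and>
     (\<forall>h. tmap [vec, \<lambda>a. Poly_Mapping.single [] (eps a)] (Delta h) = vec h) \<and>
     \<comment> \<open>quasi-coassociativity\<close>
     (\<forall>h. mulT mult (tmap [vec, Delta] (Delta h)) phi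
          = mulT mult phi (tmap [Delta, vec] (Delta h))) \<and>
     \<comment> \<open>pentagon axiom\<close>
     mulT mult (tmap [vec, vec, Delta] phi) (tmap [Delta, vec, vec] phi)
       = mulT mult (mulT mult (tens (vec one) phi) (tmap [vec, Delta, vec] phi))
                   (tens phi (vec one)) \<and>
     \<comment> \<open>normalisation\<close>
     tmap [vec, \<lambda>a. Poly_Mapping.single [] (eps a), vec] phi = tprod [one, one]"

definition quasi_antipode ::
  "(('b,'k::field) hvec \<Rightarrow> ('b,'k) hvec \<Rightarrow> ('b,'k) hvec) \<Rightarrow> ('b,'k) hvec
   \<Rightarrow> (('b,'k) hvec \<Rightarrow> ('b,'k) tens) \<Rightarrow> (('b,'k) hvec \<Rightarrow> 'k)
   \<Rightarrow> ('b,'k) tens \<Rightarrow> ('b,'k) tens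
   \<Rightarrow> (('b,'k) hvec \<Rightarrow> ('b,'k) hvec) \<Rightarrow> ('b,'k) hvec \<Rightarrow> ('b,'k) hvec \<Rightarrow> bool" where
  "quasi_antipode mult one Delta eps phi phinv S alpha beta \<longleftrightarrow>
     \<comment> \<open>S is an anti-algebra endomorphism\<close>
     linear_map S \<and> (\<forall>a b. S (mult a b) = mult (S b) (S a)) \<and> S one = one \<and>
     (\<forall>h. lin_ext (\<lambda>u. mult (mult (S (bv (u!0))) alpha) (bv (u!1))) (Delta h)
          = sc (eps h) alpha) \<and>
     (\<forall>h. lin_ext (\<lambda>u. mult (mult (bv (u!0)) beta) (S (bv (u!1)))) (Delta h)
          = sc (eps h) beta) \<and>
     lin_ext (\<lambda>u. mult (mult (mult (mult (bv (u!0)) beta) (S (bv (u!1)))) alpha) (bv (u!2))) phi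
       = one \<and>
     lin_ext (\<lambda>u. mult (mult (mult (mult (S (bv (u!0))) alpha) (bv (u!1))) beta) (S (bv (u!2)))) phinv
       = one"

definition quasi_hopf where
  "quasi_hopf mult one Delta eps phi phinv S alpha beta \<longleftrightarrow>
     quasibialgebra mult one Delta eps phi phinv \<and>
     quasi_antipode mult one Delta eps phi phinv S alpha beta"

definition subquasibialgebra where
  "subquasibialgebra mult one Delta phi K \<longleftrightarrow>
     0 \<in> K \<and> (\<forall>a\<in>K. \<forall>b\<in>K. a + b \<in> K) \<and> (\<forall>c. \<forall>a\<in>K. sc c a \<in> K) \<and>
     one \<in> K \<and> (\<forall>a\<in>K. \<forall>b\<in>K. mult a b \<in> K) \<and>
     (\<forall>a\<in>K. Delta a \<in> tpow K 2) \<and> phi \<in> tpow K 3"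

definition finite_dimensional :: "('c \<Rightarrow>\<^sub>0 'k::field) set \<Rightarrow> bool" where
  "finite_dimensional K \<longleftrightarrow> (\<exists>F. finite F \<and> K \<subseteq> lspan F)"

end

theory Submission
  imports Defs "HOL.Vector_Spaces"
begin

lemma lookup_sc[simp]: "Poly_Mapping.lookup (sc c p) k = c * Poly_Mapping.lookup p k"
  unfolding sc_def by transfer (simp add: when_def)

lemma sc_eq_iff: "sc c p = q \<longleftrightarrow> (\<forall>k. c * Poly_Mapping.lookup p k = Poly_Mapping.lookup q k)"
  by (auto simp: poly_mapping_eq_iff fun_eq_iff)

lemma sc_add: "sc c (x + y) = sc c x + sc c y"
  by (simp add: poly_mapping_eq_iff fun_eq_iff lookup_add distrib_left)
lemma sc_add2: "sc (a + b) x = sc a x + sc b x"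
  by (simp add: poly_mapping_eq_iff fun_eq_iff lookup_add distrib_right)
lemma sc_sc[simp]: "sc a (sc b x) = sc (a * b) x"
  by (simp add: poly_mapping_eq_iff fun_eq_iff mult.assoc)
lemma sc_one[simp]: "sc 1 x = x"
  by (simp add: poly_mapping_eq_iff fun_eq_iff)
lemma sc_zero[simp]: "sc 0 x = 0" "sc c 0 = 0"
  by (simp_all add: poly_mapping_eq_iff fun_eq_iff)
lemma sc_uminus: "sc c (- x) = - sc c x"
  by (simp add: poly_mapping_eq_iff fun_eq_iff)
lemma sc_sum: "sc c (sum f A) = (\<Sum>a\<in>A. sc c (f a))"
  by (induction A rule: infinite_finite_induct) (auto simp: sc_add)
lemma sc_sum2: "sc (sum f A) x = (\<Sum>a\<in>A. sc (f a) x)"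
  by (induction A rule: infinite_finite_induct) (auto simp: sc_add2)

definition glin :: "('c \<Rightarrow> ('d \<Rightarrow>\<^sub>0 'k::field)) \<Rightarrow> ('c \<Rightarrow>\<^sub>0 'k) \<Rightarrow> ('d \<Rightarrow>\<^sub>0 'k)" where
  "glin g x = (\<Sum>u\<in>Poly_Mapping.keys x. sc (Poly_Mapping.lookup x u) (g u))"

lemma lin_ext_glin: "lin_ext = glin"
  by (simp add: fun_eq_iff lin_ext_def glin_def)

lemma glin_superset:
  assumes "finite A" "Poly_Mapping.keys x \<subseteq> A"
  shows "glin g x = (\<Sum>u\<in>A. sc (Poly_Mapping.lookup x u) (g u))"
  unfolding glin_def
  by (rule sum.mono_neutral_left) (use assms in \<open>auto simp: in_keys_iff\<close>)

lemma glin_add: "glin g (x + y) = glin g x + glin g y"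
proof -
  let ?A = "Poly_Mapping.keys x \<union> Poly_Mapping.keys y"
  have "glin g (x + y) = (\<Sum>u\<in>?A. sc (Poly_Mapping.lookup (x+y) u) (g u))"
    by (rule glin_superset) (auto simp: keys_add)
  also have "\<dots> = (\<Sum>u\<in>?A. sc (Poly_Mapping.lookup x u) (g u)) + (\<Sum>u\<in>?A. sc (Poly_Mapping.lookup y u) (g u))"
    by (simp add: lookup_add sc_add2 sum.distrib)
  also have "\<dots> = glin g x + glin g y"
    by (subst (1 2) glin_superset[of ?A]) auto
  finally show ?thesis .
qed

lemma keys_sc: "Poly_Mapping.keys (sc c x) \<subseteq> Poly_Mapping.keys x"
  by (auto simp: in_keys_iff)

lemma glin_sc: "glin g (sc c x) = sc c (glin g x)"
proof -
  have "glin g (sc c x) = (\<Sum>u\<in>Poly_Mapping.keys x. sc (Poly_Mapping.lookup (sc c x) u) (g u))"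
    by (rule glin_superset) (auto simp: keys_sc[THEN subsetD])
  then show ?thesis by (simp add: glin_def sc_sum)
qed

lemma glin_zero[simp]: "glin g 0 = 0"
  by (simp add: glin_def)

lemma glin_single[simp]: "glin g (Poly_Mapping.single k c) = sc c (g k)"
  by (cases "c = 0") (simp_all add: glin_def)

lemma glin_sum: "glin g (sum f A) = (\<Sum>a\<in>A. glin g (f a))"
  by (induction A rule: infinite_finite_induct) (auto simp: glin_add)

lemma glin_uminus: "glin g (- x) = - glin g x"
proof -
  have "glin g (- x + x) = glin g (- x) + glin g x" by (rule glin_add)
  then have "glin g (- x) + glin g x = 0" by simp
  then show ?thesis by (simp add: eq_neg_iff_add_eq_0)
qed

lemma glin_diff: "glin g (x - y) = glin g x - glin g y"
  by (simp only: diff_conv_add_uminus glin_add glin_uminus)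

lemma glin_cong: "(\<And>u. u \<in> Poly_Mapping.keys x \<Longrightarrow> g u = g' u) \<Longrightarrow> glin g x = glin g' x"
  by (simp add: glin_def)

lemma glin_fadd: "glin (\<lambda>u. g1 u + g2 u) x = glin g1 x + glin g2 x"
  by (simp add: glin_def sc_add sum.distrib)

lemma glin_fsc: "glin (\<lambda>u. sc c (g u)) x = sc c (glin g x)"
  by (simp add: glin_def sc_sum mult.commute)

lemma glin_f0[simp]: "glin (\<lambda>u. 0) x = 0"
  by (simp add: glin_def)

lemma linear_map_0: "linear_map F \<Longrightarrow> F 0 = 0"
proof -
  assume "linear_map F"
  then have "F (sc 0 0) = sc 0 (F 0)" by (simp only: linear_map_def)
  then show ?thesis by simp
qed

lemma linear_map_sum: "linear_map F \<Longrightarrow> F (sum f A) = (\<Sum>a\<in>A. F (f a))"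
  by (induction A rule: infinite_finite_induct) (auto simp: linear_map_0 linear_map_def)

lemma glin_commute: "linear_map F \<Longrightarrow> F (glin g x) = glin (\<lambda>u. F (g u)) x"
  unfolding glin_def by (simp add: linear_map_sum) (simp add: linear_map_def)

lemma sum_if_delta_mult: "finite A \<Longrightarrow> (\<Sum>x\<in>A. f x * (if x = k then 1 else 0)) = (if k \<in> A then f k else (0::'a::semiring_1))"
proof -
  have "(\<Sum>x\<in>A. f x * (if x = k then 1 else 0)) = (\<Sum>x\<in>A. if x = k then f k else 0)"
    by (rule sum.cong) auto
  also assume "finite A"
  then have "(\<Sum>x\<in>A. if x = k then f k else 0) = (if k \<in> A then f k else 0)"
    by (rule sum.delta)
  finally show ?thesis .
qed

lemma glin_bv: "glin bv a = a"
proof (rule poly_mapping_eqI)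
  fix k
  show "Poly_Mapping.lookup (glin bv a) k = Poly_Mapping.lookup a k"
    by (simp add: glin_def bv_def lookup_sum lookup_single when_def sum_if_delta_mult in_keys_iff)
qed

lemma lin_expand: "linear_map F \<Longrightarrow> F a = glin (\<lambda>i. F (bv i)) a"
proof -
  assume "linear_map F"
  then have "F (glin bv a) = glin (\<lambda>i. F (bv i)) a" by (rule glin_commute)
  then show ?thesis by (simp add: glin_bv)
qed

lemma glin_swap: "glin (\<lambda>u. glin (\<lambda>v. g u v) y) x = glin (\<lambda>v. glin (\<lambda>u. g u v) x) y"
proof -
  have "glin (\<lambda>u. glin (\<lambda>v. g u v) y) x = (\<Sum>u\<in>Poly_Mapping.keys x. \<Sum>v\<in>Poly_Mapping.keys y.
      sc (Poly_Mapping.lookup x u * Poly_Mapping.lookup y v) (g u v))"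
    by (simp add: glin_def sc_sum)
  also have "\<dots> = (\<Sum>v\<in>Poly_Mapping.keys y. \<Sum>u\<in>Poly_Mapping.keys x.
      sc (Poly_Mapping.lookup x u * Poly_Mapping.lookup y v) (g u v))"
    by (rule sum.swap)
  also have "\<dots> = glin (\<lambda>v. glin (\<lambda>u. g u v) x) y"
    by (simp add: glin_def sc_sum mult.commute)
  finally show ?thesis .
qed

lemma linear_map_glin: "linear_map (glin g)"
  by (simp add: linear_map_def glin_add glin_sc)


lemma sc_single[simp]: "sc c (Poly_Mapping.single k d) = Poly_Mapping.single k (c * d)"
  by (simp add: poly_mapping_eq_iff fun_eq_iff lookup_single when_def)

lemma tens_glin: "tens x y = glin (\<lambda>u. glin (\<lambda>v. Poly_Mapping.single (u @ v) 1) y) x"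
  unfolding tens_def glin_def
  by (simp add: sc_sum)

lemma vec_glin: "vec a = glin (\<lambda>i. Poly_Mapping.single [i] 1) a"
  unfolding vec_def glin_def by simp

lemma linear_mapI: "(\<And>a b. f (a + b) = f a + f b) \<Longrightarrow> (\<And>c a. f (sc c a) = sc c (f a)) \<Longrightarrow> linear_map f"
  by (simp add: linear_map_def)

lemma linear_map_add: "linear_map f \<Longrightarrow> f (a + b) = f a + f b"
  by (simp add: linear_map_def)
lemma linear_map_sc: "linear_map f \<Longrightarrow> f (sc c a) = sc c (f a)"
  by (simp add: linear_map_def)

lemma glin_tens: "glin g (tens x y) = glin (\<lambda>u. glin (\<lambda>v. g (u @ v)) y) x"
  by (simp add: tens_glin glin_commute[OF linear_map_glin])

lemma glin_vec: "glin g (vec a) = glin (\<lambda>i. g [i]) a"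
  by (simp add: vec_glin glin_commute[OF linear_map_glin])

lemma glin_tunit: "glin g tunit = g []"
  by (simp add: tunit_def)

lemma tprod_Nil: "tprod [] = tunit" and tprod_Cons: "tprod (a # as) = tens (vec a) (tprod as)"
  by (simp_all add: tprod_def)

lemma linear_map_vec: "linear_map vec"
  by (rule linear_mapI) (simp_all only: vec_glin glin_add glin_sc)

lemma linear_map_tens1: "linear_map (\<lambda>x. tens x y)"
  unfolding tens_glin by (rule linear_map_glin)

lemma linear_map_tens2: "linear_map (\<lambda>y. tens x y)"
proof (rule linear_mapI)
  fix a b show "tens x (a + b) = tens x a + tens x b"
    unfolding tens_glin by (simp only: glin_add glin_fadd)
next
  fix c a show "tens x (sc c a) = sc c (tens x a)"
    unfolding tens_glin by (simp only: glin_sc glin_fsc)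
qed

lemma linear_map_comp: "linear_map f \<Longrightarrow> linear_map g \<Longrightarrow> linear_map (\<lambda>a. f (g a))"
  by (simp add: linear_map_def)

definition C2 where "C2 F t = glin (\<lambda>u. F (bv (u!0)) (bv (u!1))) t"
definition C3 where "C3 F t = glin (\<lambda>u. F (bv (u!0)) (bv (u!1)) (bv (u!2))) t"
definition C4 where "C4 F t = glin (\<lambda>u. F (bv (u!0)) (bv (u!1)) (bv (u!2)) (bv (u!3))) t"

definition bilin where "bilin F \<longleftrightarrow> (\<forall>b. linear_map (\<lambda>a. F a b)) \<and> (\<forall>a. linear_map (\<lambda>b. F a b))"
definition trilin where "trilin F \<longleftrightarrow> (\<forall>b c. linear_map (\<lambda>a. F a b c)) \<and> (\<forall>a c. linear_map (\<lambda>b. F a b c))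
   \<and> (\<forall>a b. linear_map (\<lambda>c. F a b c))"
definition quadlin where "quadlin F \<longleftrightarrow> (\<forall>b c d. linear_map (\<lambda>a. F a b c d)) \<and> (\<forall>a c d. linear_map (\<lambda>b. F a b c d))
   \<and> (\<forall>a b d. linear_map (\<lambda>c. F a b c d)) \<and> (\<forall>a b c. linear_map (\<lambda>d. F a b c d))"

lemma lin_collapse: "linear_map F \<Longrightarrow> glin (\<lambda>i. F (bv i)) a = F a"
  by (rule lin_expand[symmetric])

lemma C2_tprod: "bilin F \<Longrightarrow> C2 F (tprod [a, b]) = F a b"
  unfolding C2_def
  apply (simp only: tprod_Cons tprod_Nil glin_tens glin_vec glin_tunit nth_Cons_0 nth_Cons_Suc append_Cons append_Nil)
  apply (simp add: bilin_def lin_collapse[where F="\<lambda>x. F x b"] lin_collapse[where F="\<lambda>x. F _ x"])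
  done

lemma C3_tprod: "trilin F \<Longrightarrow> C3 F (tprod [a, b, c]) = F a b c"
  unfolding C3_def
  apply (simp only: tprod_Cons tprod_Nil glin_tens glin_vec glin_tunit nth_Cons_0 nth_Cons_Suc append_Cons append_Nil)
  apply (simp add: trilin_def lin_collapse[where F="\<lambda>x. F x b c"] lin_collapse[where F="\<lambda>x. F _ x c"]
     lin_collapse[where F="\<lambda>x. F _ _ x"])
  done

lemma C4_tprod: "quadlin F \<Longrightarrow> C4 F (tprod [a, b, c, d]) = F a b c d"
  unfolding C4_def
  apply (simp only: tprod_Cons tprod_Nil glin_tens glin_vec glin_tunit nth_Cons_0 nth_Cons_Suc append_Cons append_Nil)
  apply (simp add: quadlin_def lin_collapse[where F="\<lambda>x. F x b c d"] lin_collapse[where F="\<lambda>x. F _ x c d"]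
     lin_collapse[where F="\<lambda>x. F _ _ x d"] lin_collapse[where F="\<lambda>x. F _ _ _ x"])
  done


lemma keys_sum_sub: "Poly_Mapping.keys (sum f A) \<subseteq> (\<Union>a\<in>A. Poly_Mapping.keys (f a))"
proof (induction A rule: infinite_finite_induct)
  case (infinite A) then show ?case by simp
next
  case empty then show ?case by simp
next
  case (insert x F)
  have "Poly_Mapping.keys (sum f (insert x F)) = Poly_Mapping.keys (f x + sum f F)"
    using insert.hyps by simp
  also have "\<dots> \<subseteq> Poly_Mapping.keys (f x) \<union> Poly_Mapping.keys (sum f F)" by (rule keys_add)
  finally show ?case using insert.IH by blast
qed

lemma keys_glin: "Poly_Mapping.keys (glin g x) \<subseteq> (\<Union>u\<in>Poly_Mapping.keys x. Poly_Mapping.keys (g u))"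
proof -
  have "Poly_Mapping.keys (glin g x) \<subseteq> (\<Union>u\<in>Poly_Mapping.keys x. Poly_Mapping.keys (sc (Poly_Mapping.lookup x u) (g u)))"
    unfolding glin_def by (rule keys_sum_sub)
  also have "\<dots> \<subseteq> (\<Union>u\<in>Poly_Mapping.keys x. Poly_Mapping.keys (g u))"
    by (rule UN_mono) (auto intro: keys_sc[THEN subsetD])
  finally show ?thesis .
qed

lemma in_tpow_glin:
  assumes "\<And>u. u \<in> Poly_Mapping.keys x \<Longrightarrow> in_tpow n (g u)"
  shows "in_tpow n (glin g x)"
  unfolding in_tpow_def
proof
  fix v assume v: "v \<in> Poly_Mapping.keys (glin g x)"
  then obtain u where u: "u \<in> Poly_Mapping.keys x" "v \<in> Poly_Mapping.keys (g u)"
    using keys_glin[of g x] by blast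
  then show "length v = n" using assms[OF u(1)] unfolding in_tpow_def by blast
qed

lemma in_tpow_single: "length u = n \<Longrightarrow> in_tpow n (Poly_Mapping.single u c)"
  unfolding in_tpow_def by (cases "c = 0") simp_all

lemma in_tpow_keys: "in_tpow n x \<Longrightarrow> u \<in> Poly_Mapping.keys x \<Longrightarrow> length u = n"
  unfolding in_tpow_def by blast

lemma in_tpow_tens: "in_tpow n x \<Longrightarrow> in_tpow m y \<Longrightarrow> in_tpow (n + m) (tens x y)"
  unfolding tens_glin
  apply (rule in_tpow_glin)
  apply (rule in_tpow_glin)
  apply (rule in_tpow_single)
  apply (simp add: in_tpow_keys)
  done

lemma in_tpow_vec: "in_tpow 1 (vec a)"
  unfolding vec_glin by (rule in_tpow_glin) (rule in_tpow_single, simp)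

lemma in_tpow_tunit: "in_tpow 0 tunit"
  unfolding tunit_def by (rule in_tpow_single) simp

lemma in_tpow_tprod: "in_tpow (length as) (tprod as)"
proof (induction as)
  case Nil then show ?case by (simp add: tprod_Nil in_tpow_tunit)
next
  case (Cons a as)
  have "in_tpow (1 + length as) (tens (vec a) (tprod as))"
    by (rule in_tpow_tens[OF in_tpow_vec Cons])
  then show ?case by (simp add: tprod_Cons)
qed

lemma in_tpow_add: "in_tpow n x \<Longrightarrow> in_tpow n y \<Longrightarrow> in_tpow n (x + y)"
  unfolding in_tpow_def using keys_add[of x y] by blast

lemma in_tpow_sc: "in_tpow n x \<Longrightarrow> in_tpow n (sc c x)"
  unfolding in_tpow_def using keys_sc[of c x] by blast

lemma in_tpow_zero: "in_tpow n 0"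
  by (simp add: in_tpow_def)

lemma len2: "length u = 2 \<Longrightarrow> u = [u!0, u!1]"
  by (auto simp: numeral_eq_Suc length_Suc_conv)
lemma len3: "length u = 3 \<Longrightarrow> u = [u!0, u!1, u!2]"
  by (auto simp: numeral_eq_Suc length_Suc_conv)
lemma len4: "length u = 4 \<Longrightarrow> u = [u!0, u!1, u!2, u!3]"
  by (auto simp: numeral_eq_Suc length_Suc_conv)
lemma len1: "length u = 1 \<Longrightarrow> u = [u!0]"
  by (auto simp: length_Suc_conv)

lemma C2_glin: "C2 F (glin g x) = glin (\<lambda>u. C2 F (g u)) x"
  unfolding C2_def by (rule glin_commute[OF linear_map_glin])
lemma C3_glin: "C3 F (glin g x) = glin (\<lambda>u. C3 F (g u)) x"
  unfolding C3_def by (rule glin_commute[OF linear_map_glin])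
lemma C4_glin: "C4 F (glin g x) = glin (\<lambda>u. C4 F (g u)) x"
  unfolding C4_def by (rule glin_commute[OF linear_map_glin])

definition C1 where "C1 F t = glin (\<lambda>u. F (bv (u!0))) t"
lemma C1_glin: "C1 F (glin g x) = glin (\<lambda>u. C1 F (g u)) x"
  unfolding C1_def by (rule glin_commute[OF linear_map_glin])
lemma C1_vec: "linear_map F \<Longrightarrow> C1 F (vec a) = F a"
  unfolding C1_def by (simp add: glin_vec lin_collapse)

lemma linear_map_C1: "linear_map (\<lambda>a. C1 F (f a))" if "linear_map f"
  using that unfolding C1_def linear_map_def by (simp add: glin_add glin_sc)
lemma linear_map_C2: "linear_map (\<lambda>a. C2 F (f a))" if "linear_map f"
  using that unfolding C2_def linear_map_def by (simp add: glin_add glin_sc)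
lemma linear_map_C3: "linear_map (\<lambda>a. C3 F (f a))" if "linear_map f"
  using that unfolding C3_def linear_map_def by (simp add: glin_add glin_sc)
lemma linear_map_C4: "linear_map (\<lambda>a. C4 F (f a))" if "linear_map f"
  using that unfolding C4_def linear_map_def by (simp add: glin_add glin_sc)

lemma linear_map_glinfun: "(\<And>u. linear_map (\<lambda>a. G a u)) \<Longrightarrow> linear_map (\<lambda>a. glin (G a) t)"
proof (rule linear_mapI)
  assume A: "\<And>u. linear_map (\<lambda>a. G a u)"
  fix a b c
  have "G (a + b) = (\<lambda>u. G a u + G b u)" by (rule ext) (rule linear_map_add[OF A])
  then show "glin (G (a + b)) t = glin (G a) t + glin (G b) t" by (simp only: glin_fadd)
  have "G (sc c a) = (\<lambda>u. sc c (G a u))" by (rule ext) (rule linear_map_sc[OF A])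
  then show "glin (G (sc c a)) t = sc c (glin (G a) t)" by (simp only: glin_fsc)
qed

lemma linear_map_C2fun: "(\<And>x y. linear_map (\<lambda>a. G a x y)) \<Longrightarrow> linear_map (\<lambda>a. C2 (G a) t)"
  unfolding C2_def by (rule linear_map_glinfun)
lemma linear_map_C3fun: "(\<And>x y z. linear_map (\<lambda>a. G a x y z)) \<Longrightarrow> linear_map (\<lambda>a. C3 (G a) t)"
  unfolding C3_def by (rule linear_map_glinfun)
lemma linear_map_C4fun: "(\<And>x y z w. linear_map (\<lambda>a. G a x y z w)) \<Longrightarrow> linear_map (\<lambda>a. C4 (G a) t)"
  unfolding C4_def by (rule linear_map_glinfun)
lemma linear_map_C1fun: "(\<And>x. linear_map (\<lambda>a. G a x)) \<Longrightarrow> linear_map (\<lambda>a. C1 (G a) t)"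
  unfolding C1_def by (rule linear_map_glinfun)

lemma linear_map_id: "linear_map (\<lambda>a. a)"
  by (simp add: linear_map_def)
lemma linear_map_sc_out: "linear_map f \<Longrightarrow> linear_map (\<lambda>a. sc c (f a))"
  unfolding linear_map_def by (simp add: sc_add mult.commute)
lemma linear_map_vec_comp: "linear_map f \<Longrightarrow> linear_map (\<lambda>a. vec (f a))"
  using linear_map_comp[OF linear_map_vec] .
lemma linear_map_tens_l: "linear_map f \<Longrightarrow> linear_map (\<lambda>a. tens (f a) t)"
  using linear_map_comp[OF linear_map_tens1] .
lemma linear_map_tens_r: "linear_map f \<Longrightarrow> linear_map (\<lambda>a. tens t (f a))"
  using linear_map_comp[OF linear_map_tens2] .
lemma linear_map_tprod1: "linear_map f \<Longrightarrow> linear_map (\<lambda>a. tprod (f a # l))"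
  unfolding tprod_Cons by (rule linear_map_tens_l) (rule linear_map_vec_comp)
lemma linear_map_tprod2: "linear_map (\<lambda>a. tprod (L a)) \<Longrightarrow> linear_map (\<lambda>a. tprod (c # L a))"
  unfolding tprod_Cons by (rule linear_map_tens_r)
lemma linear_map_add_fun: "linear_map f \<Longrightarrow> linear_map g \<Longrightarrow> linear_map (\<lambda>a. f a + g a)"
  unfolding linear_map_def by (simp add: sc_add add_ac)


locale QH =
  fixes mult :: "('b,'k::field) hvec \<Rightarrow> ('b,'k) hvec \<Rightarrow> ('b,'k) hvec"
    and one :: "('b,'k) hvec"
    and Delta :: "('b,'k) hvec \<Rightarrow> ('b,'k) tens"
    and eps :: "('b,'k) hvec \<Rightarrow> 'k"
    and phi phinv :: "('b,'k) tens"
    and S :: "('b,'k) hvec \<Rightarrow> ('b,'k) hvec"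
    and alpha beta :: "('b,'k) hvec"
    and K :: "('b,'k) hvec set"
  assumes qh: "quasi_hopf mult one Delta eps phi phinv S alpha beta"
    and sub: "subquasibialgebra mult one Delta phi K"
    and fd: "finite_dimensional K"
    and hyp: "lin_ext (\<lambda>u. tens (vec (mult (mult (S (bv (u!0))) alpha) (bv (u!1)))) (vec (bv (u!2)))) phinv
           \<in> tpow K 2"
begin

lemma kalg: "k_algebra mult one" using qh by (simp add: quasi_hopf_def quasibialgebra_def)
lemma mult_lin1: "linear_map (\<lambda>a. mult a b)" using kalg by (simp add: k_algebra_def)
lemma mult_lin2: "linear_map (\<lambda>b. mult a b)" using kalg by (simp add: k_algebra_def)
lemma assoc: "mult (mult a b) c = mult a (mult b c)" using kalg by (simp add: k_algebra_def)
lemma one_l[simp]: "mult one a = a" using kalg by (simp add: k_algebra_def)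
lemma one_r[simp]: "mult a one = a" using kalg by (simp add: k_algebra_def)

lemma Delta_lin: "linear_map Delta" using qh by (simp add: quasi_hopf_def quasibialgebra_def)
lemma Delta_tp: "in_tpow 2 (Delta h)" using qh by (simp add: quasi_hopf_def quasibialgebra_def)
lemma Delta_mult: "Delta (mult a b) = mulT mult (Delta a) (Delta b)" using qh by (simp add: quasi_hopf_def quasibialgebra_def)
lemma Delta_one: "Delta one = tprod [one, one]" using qh by (simp add: quasi_hopf_def quasibialgebra_def)
lemma eps_lin: "linear_functional eps" using qh by (simp add: quasi_hopf_def quasibialgebra_def)
lemma eps_mult: "eps (mult a b) = eps a * eps b" using qh by (simp add: quasi_hopf_def quasibialgebra_def)
lemma eps_one: "eps one = 1" using qh by (simp add: quasi_hopf_def quasibialgebra_def)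
lemma phi_tp: "in_tpow 3 phi" using qh by (simp add: quasi_hopf_def quasibialgebra_def)
lemma phinv_tp: "in_tpow 3 phinv" using qh by (simp add: quasi_hopf_def quasibialgebra_def)
lemma phi_inv1: "mulT mult phi phinv = tprod [one, one, one]" using qh by (simp add: quasi_hopf_def quasibialgebra_def)
lemma phi_inv2: "mulT mult phinv phi = tprod [one, one, one]" using qh by (simp add: quasi_hopf_def quasibialgebra_def)
lemma counitL: "tmap [\<lambda>a. Poly_Mapping.single [] (eps a), vec] (Delta h) = vec h"
  using qh by (simp add: quasi_hopf_def quasibialgebra_def)
lemma counitR: "tmap [vec, \<lambda>a. Poly_Mapping.single [] (eps a)] (Delta h) = vec h"
  using qh by (simp add: quasi_hopf_def quasibialgebra_def)
lemma coassoc: "mulT mult (tmap [vec, Delta] (Delta h)) phi = mulT mult phi (tmap [Delta, vec] (Delta h))"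
  using qh by (simp add: quasi_hopf_def quasibialgebra_def)
lemma pentagon: "mulT mult (tmap [vec, vec, Delta] phi) (tmap [Delta, vec, vec] phi)
       = mulT mult (mulT mult (tens (vec one) phi) (tmap [vec, Delta, vec] phi)) (tens phi (vec one))"
  using qh by (simp add: quasi_hopf_def quasibialgebra_def)
lemma normal: "tmap [vec, \<lambda>a. Poly_Mapping.single [] (eps a), vec] phi = tprod [one, one]"
  using qh by (simp add: quasi_hopf_def quasibialgebra_def)

lemma S_lin: "linear_map S" using qh by (simp add: quasi_hopf_def quasi_antipode_def)
lemma S_anti: "S (mult a b) = mult (S b) (S a)" using qh by (simp add: quasi_hopf_def quasi_antipode_def)
lemma S_one: "S one = one" using qh by (simp add: quasi_hopf_def quasi_antipode_def)
lemma ax1: "lin_ext (\<lambda>u. mult (mult (S (bv (u!0))) alpha) (bv (u!1))) (Delta h) = sc (eps h) alpha"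
  using qh by (simp add: quasi_hopf_def quasi_antipode_def)
lemma ax2: "lin_ext (\<lambda>u. mult (mult (bv (u!0)) beta) (S (bv (u!1)))) (Delta h) = sc (eps h) beta"
  using qh by (simp add: quasi_hopf_def quasi_antipode_def)
lemma ax3: "lin_ext (\<lambda>u. mult (mult (mult (mult (bv (u!0)) beta) (S (bv (u!1)))) alpha) (bv (u!2))) phi = one"
  using qh by (simp add: quasi_hopf_def quasi_antipode_def)
lemma ax4: "lin_ext (\<lambda>u. mult (mult (mult (mult (S (bv (u!0))) alpha) (bv (u!1))) beta) (S (bv (u!2)))) phinv = one"
  using qh by (simp add: quasi_hopf_def quasi_antipode_def)

lemma K0: "0 \<in> K" using sub by (simp add: subquasibialgebra_def)
lemma Kadd: "a \<in> K \<Longrightarrow> b \<in> K \<Longrightarrow> a + b \<in> K" using sub by (simp add: subquasibialgebra_def)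
lemma Ksc: "a \<in> K \<Longrightarrow> sc c a \<in> K" using sub by (simp add: subquasibialgebra_def)
lemma Kone: "one \<in> K" using sub by (simp add: subquasibialgebra_def)
lemma Kmult: "a \<in> K \<Longrightarrow> b \<in> K \<Longrightarrow> mult a b \<in> K" using sub by (simp add: subquasibialgebra_def)
lemma KDelta: "a \<in> K \<Longrightarrow> Delta a \<in> tpow K 2" using sub by (simp add: subquasibialgebra_def)
lemma Kphi: "phi \<in> tpow K 3" using sub by (simp add: subquasibialgebra_def)


lemma lin_mult_l: "linear_map f \<Longrightarrow> linear_map (\<lambda>a. mult (f a) c)"
  using linear_map_comp[OF mult_lin1] .
lemma lin_mult_r: "linear_map f \<Longrightarrow> linear_map (\<lambda>a. mult c (f a))"
  using linear_map_comp[OF mult_lin2] .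
lemma lin_S: "linear_map f \<Longrightarrow> linear_map (\<lambda>a. S (f a))"
  using linear_map_comp[OF S_lin] .
lemma lin_Delta: "linear_map f \<Longrightarrow> linear_map (\<lambda>a. Delta (f a))"
  using linear_map_comp[OF Delta_lin] .
lemma eps_add: "eps (a + b) = eps a + eps b" using eps_lin by (simp add: linear_functional_def)
lemma eps_sc: "eps (sc c a) = c * eps a" using eps_lin by (simp add: linear_functional_def)
lemma lin_eps: "linear_map f \<Longrightarrow> linear_map (\<lambda>a. sc (eps (f a)) v)"
  unfolding linear_map_def by (simp add: eps_add eps_sc sc_add2)

lemma mulT_glin: "mulT mult x y = glin (\<lambda>u. glin (\<lambda>v. tprod (map2 mult (map bv u) (map bv v))) y) x"
  by (simp add: mulT_def lin_ext_glin)

lemma lin_mulT_l: "linear_map f \<Longrightarrow> linear_map (\<lambda>a. mulT mult (f a) t)"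
  unfolding mulT_glin by (rule linear_map_comp[OF linear_map_glin])
lemma lin_mulT_r: "linear_map f \<Longrightarrow> linear_map (\<lambda>a. mulT mult t (f a))"
  unfolding mulT_glin
  by (rule linear_map_glinfun, rule linear_map_comp[OF linear_map_glin])

lemmas lin_rules = linear_map_id lin_mult_l lin_mult_r lin_S lin_Delta lin_eps linear_map_sc_out
  linear_map_vec_comp linear_map_tens_l linear_map_tens_r linear_map_tprod1 linear_map_tprod2
  linear_map_C1fun linear_map_C2fun linear_map_C3fun linear_map_C4fun linear_map_glinfun
  linear_map_C1 linear_map_C2 linear_map_C3 linear_map_C4
  lin_mulT_l lin_mulT_r linear_map_add_fun

end

lemma glin_glin: "glin g (glin h x) = glin (\<lambda>u. glin g (h u)) x"
  by (rule glin_commute[OF linear_map_glin])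

lemma glin_bvi[simp]: "glin g (bv i) = g i"
  by (simp add: bv_def)

lemma len2E: "length u = 2 \<Longrightarrow> (\<And>a b. u = [a, b] \<Longrightarrow> P) \<Longrightarrow> P"
  by (auto simp: numeral_eq_Suc length_Suc_conv)
lemma len3E: "length u = 3 \<Longrightarrow> (\<And>a b c. u = [a, b, c] \<Longrightarrow> P) \<Longrightarrow> P"
  by (auto simp: numeral_eq_Suc length_Suc_conv)
lemma len4E: "length u = 4 \<Longrightarrow> (\<And>a b c d. u = [a, b, c, d] \<Longrightarrow> P) \<Longrightarrow> P"
  by (auto simp: numeral_eq_Suc length_Suc_conv)
lemma len1E: "length u = 1 \<Longrightarrow> (\<And>a. u = [a] \<Longrightarrow> P) \<Longrightarrow> P"
  by (auto simp: length_Suc_conv)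

lemma glin_cong2: "in_tpow 2 X \<Longrightarrow> (\<And>a b. g [a, b] = g' [a, b]) \<Longrightarrow> glin g X = glin g' X"
  by (rule glin_cong) (metis in_tpow_keys len2E)
lemma glin_cong3: "in_tpow 3 X \<Longrightarrow> (\<And>a b c. g [a, b, c] = g' [a, b, c]) \<Longrightarrow> glin g X = glin g' X"
  by (rule glin_cong) (metis in_tpow_keys len3E)
lemma glin_cong4: "in_tpow 4 X \<Longrightarrow> (\<And>a b c d. g [a, b, c, d] = g' [a, b, c, d]) \<Longrightarrow> glin g X = glin g' X"
  by (rule glin_cong) (metis in_tpow_keys len4E)

lemma tmap_glin: "tmap fs x = glin (\<lambda>u. foldr tens (map2 (\<lambda>f i. f (bv i)) fs u) tunit) x"
  by (simp add: tmap_def lin_ext_glin)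

lemmas tsimps = glin_tens glin_vec glin_tunit numeral_2_eq_2 numeral_3_eq_3

lemma vec_bv: "vec (bv i) = Poly_Mapping.single [i] 1"
  by (simp add: vec_glin)
lemma tens_single: "tens (Poly_Mapping.single u a) (Poly_Mapping.single v b) = Poly_Mapping.single (u @ v) (a * b)"
  by (simp add: tens_glin)
lemma tprod_bv: "tprod (map bv u) = Poly_Mapping.single u 1"
proof (induction u)
  case Nil then show ?case by (simp add: tprod_Nil tunit_def)
next
  case (Cons i u) then show ?case by (simp add: tprod_Cons vec_bv tens_single)
qed
lemma glin_single_id: "glin (\<lambda>u. Poly_Mapping.single u 1) t = t"
  using glin_bv[of t] unfolding bv_def[abs_def] .

lemma ident2: "in_tpow 2 t \<Longrightarrow> C2 (\<lambda>a b. tprod [a, b]) t = t"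
  unfolding C2_def
  apply (rule trans[OF _ glin_single_id])
  apply (rule glin_cong2, assumption)
  subgoal for a b using tprod_bv[of "[a,b]"] by simp
  done
lemma ident3: "in_tpow 3 t \<Longrightarrow> C3 (\<lambda>a b c. tprod [a, b, c]) t = t"
  unfolding C3_def
  apply (rule trans[OF _ glin_single_id])
  apply (rule glin_cong3, assumption)
  subgoal for a b c using tprod_bv[of "[a,b,c]"] by simp
  done
lemma ident4: "in_tpow 4 t \<Longrightarrow> C4 (\<lambda>a b c d. tprod [a, b, c, d]) t = t"
  unfolding C4_def
  apply (rule trans[OF _ glin_single_id])
  apply (rule glin_cong4, assumption)
  subgoal for a b c d using tprod_bv[of "[a,b,c,d]"] by simp
  done

context QH begin

lemma C2_mulT:
  assumes "in_tpow 2 x" "in_tpow 2 y" "bilin F"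
  shows "C2 F (mulT mult x y) = C2 (\<lambda>a b. C2 (\<lambda>a' b'. F (mult a a') (mult b b')) y) x"
proof -
  have R: "C2 (\<lambda>a b. C2 (\<lambda>a' b'. F (mult a a') (mult b b')) y) x = glin (\<lambda>u. glin (\<lambda>v.
     F (mult (bv (u!0)) (bv (v!0))) (mult (bv (u!1)) (bv (v!1)))) y) x" by (simp only: C2_def)
  show ?thesis unfolding R mulT_glin C2_glin
    apply (rule glin_cong2[OF assms(1)])
    apply (rule glin_cong2[OF assms(2)])
    apply (simp add: C2_tprod[OF assms(3)])
    done
qed

lemma C3_mulT:
  assumes "in_tpow 3 x" "in_tpow 3 y" "trilin F"
  shows "C3 F (mulT mult x y) = C3 (\<lambda>a b c. C3 (\<lambda>a' b' c'. F (mult a a') (mult b b') (mult c c')) y) x"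
proof -
  have R: "C3 (\<lambda>a b c. C3 (\<lambda>a' b' c'. F (mult a a') (mult b b') (mult c c')) y) x = glin (\<lambda>u. glin (\<lambda>v.
     F (mult (bv (u!0)) (bv (v!0))) (mult (bv (u!1)) (bv (v!1))) (mult (bv (u!2)) (bv (v!2)))) y) x"
    by (simp only: C3_def)
  show ?thesis unfolding R mulT_glin C3_glin
    apply (rule glin_cong3[OF assms(1)])
    apply (rule glin_cong3[OF assms(2)])
    apply (simp add: C3_tprod[OF assms(3)])
    done
qed

lemma C4_mulT:
  assumes "in_tpow 4 x" "in_tpow 4 y" "quadlin F"
  shows "C4 F (mulT mult x y) = C4 (\<lambda>a b c d. C4 (\<lambda>a' b' c' d'. F (mult a a') (mult b b') (mult c c') (mult d d')) y) x"
proof -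
  have R: "C4 (\<lambda>a b c d. C4 (\<lambda>a' b' c' d'. F (mult a a') (mult b b') (mult c c') (mult d d')) y) x
     = glin (\<lambda>u. glin (\<lambda>v.
     F (mult (bv (u!0)) (bv (v!0))) (mult (bv (u!1)) (bv (v!1))) (mult (bv (u!2)) (bv (v!2))) (mult (bv (u!3)) (bv (v!3)))) y) x"
    by (simp only: C4_def)
  show ?thesis unfolding R mulT_glin C4_glin
    apply (rule glin_cong4[OF assms(1)])
    apply (rule glin_cong4[OF assms(2)])
    apply (simp add: C4_tprod[OF assms(3)])
    done
qed

lemma in_tpow_mulT: "in_tpow n x \<Longrightarrow> in_tpow n y \<Longrightarrow> in_tpow n (mulT mult x y)"
  unfolding mulT_glin
  apply (rule in_tpow_glin)
  apply (rule in_tpow_glin)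
  subgoal for u v
    using in_tpow_tprod[of "map2 mult (map bv u) (map bv v)"] by (simp add: in_tpow_keys)
  done

lemma C3_tmap_vD: "in_tpow 2 x \<Longrightarrow> C3 F (tmap [vec, Delta] x) = C2 (\<lambda>a b. C2 (\<lambda>b1 b2. F a b1 b2) (Delta b)) x"
  unfolding tmap_glin C3_glin C2_def
  apply (rule glin_cong2, assumption)
  apply (simp add: C3_def tsimps)
  done

lemma C3_tmap_Dv: "in_tpow 2 x \<Longrightarrow> C3 F (tmap [Delta, vec] x) = C2 (\<lambda>a b. C2 (\<lambda>a1 a2. F a1 a2 b) (Delta a)) x"
  unfolding tmap_glin C3_glin C2_def
  apply (rule glin_cong2, assumption)
  apply (simp add: C3_def tsimps)
  apply (rule glin_cong2[OF Delta_tp])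
  apply (simp add: tsimps)
  done

lemma C4_tmap_vvD: "in_tpow 3 x \<Longrightarrow> C4 F (tmap [vec, vec, Delta] x) = C3 (\<lambda>a b c. C2 (\<lambda>c1 c2. F a b c1 c2) (Delta c)) x"
  unfolding tmap_glin C4_glin C3_def
  apply (rule glin_cong3, assumption)
  apply (simp add: C4_def C2_def tsimps)
  done

lemma C4_tmap_Dvv: "in_tpow 3 x \<Longrightarrow> C4 F (tmap [Delta, vec, vec] x) = C3 (\<lambda>a b c. C2 (\<lambda>a1 a2. F a1 a2 b c) (Delta a)) x"
  unfolding tmap_glin C4_glin C3_def
  apply (rule glin_cong3, assumption)
  apply (simp add: C4_def C2_def tsimps)
  apply (rule glin_cong2[OF Delta_tp])
  apply (simp add: tsimps)
  done

lemma C4_tmap_vDv: "in_tpow 3 x \<Longrightarrow> C4 F (tmap [vec, Delta, vec] x) = C3 (\<lambda>a b c. C2 (\<lambda>b1 b2. F a b1 b2 c) (Delta b)) x"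
  unfolding tmap_glin C4_glin C3_def
  apply (rule glin_cong3, assumption)
  apply (simp add: C4_def C2_def tsimps)
  apply (rule glin_cong2[OF Delta_tp])
  apply (simp add: tsimps)
  done

lemma C1_tmap_ev: "in_tpow 2 x \<Longrightarrow> C1 F (tmap [\<lambda>a. Poly_Mapping.single [] (eps a), vec] x) = C2 (\<lambda>a b. sc (eps a) (F b)) x"
  unfolding tmap_glin C1_glin C2_def
  apply (rule glin_cong2, assumption)
  apply (simp add: C1_def tsimps)
  done

lemma C1_tmap_ve: "in_tpow 2 x \<Longrightarrow> C1 F (tmap [vec, \<lambda>a. Poly_Mapping.single [] (eps a)] x) = C2 (\<lambda>a b. sc (eps b) (F a)) x"
  unfolding tmap_glin C1_glin C2_def
  apply (rule glin_cong2, assumption)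
  apply (simp add: C1_def tsimps)
  done

lemma C2_tmap_vev: "in_tpow 3 x \<Longrightarrow> C2 F (tmap [vec, \<lambda>a. Poly_Mapping.single [] (eps a), vec] x) = C3 (\<lambda>a b c. sc (eps b) (F a c)) x"
  unfolding tmap_glin C2_glin C3_def
  apply (rule glin_cong3, assumption)
  apply (simp add: C2_def tsimps)
  done

lemma C4_tens_1x:
  assumes "\<And>b c d. linear_map (\<lambda>a. F a b c d)"
  shows "C4 F (tens (vec one) x) = C3 (\<lambda>a b c. F one a b c) x"
proof -
  have "C4 F (tens (vec one) x) = glin (\<lambda>i. C3 (F (bv i)) x) one"
    by (simp add: C4_def C3_def tsimps)
  also have "\<dots> = C3 (F one) x"
    by (rule lin_collapse) (rule linear_map_C3fun, rule assms)
  finally show ?thesis .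
qed

lemma C4_tens_x1:
  assumes "in_tpow 3 x" "\<And>a b c. linear_map (\<lambda>d. F a b c d)"
  shows "C4 F (tens x (vec one)) = C3 (\<lambda>a b c. F a b c one) x"
  unfolding C4_def C3_def glin_tens glin_vec
  apply (rule glin_cong3[OF assms(1)])
  apply (simp add: lin_collapse[OF assms(2)])
  done

end

lemma bilinI: "(\<And>b. linear_map (\<lambda>a. F a b)) \<Longrightarrow> (\<And>a. linear_map (\<lambda>b. F a b)) \<Longrightarrow> bilin F"
  by (simp add: bilin_def)
lemma trilinI: "(\<And>b c. linear_map (\<lambda>a. F a b c)) \<Longrightarrow> (\<And>a c. linear_map (\<lambda>b. F a b c))
  \<Longrightarrow> (\<And>a b. linear_map (\<lambda>c. F a b c)) \<Longrightarrow> trilin F"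
  by (simp add: trilin_def)
lemma quadlinI: "(\<And>b c d. linear_map (\<lambda>a. F a b c d)) \<Longrightarrow> (\<And>a c d. linear_map (\<lambda>b. F a b c d))
  \<Longrightarrow> (\<And>a b d. linear_map (\<lambda>c. F a b c d)) \<Longrightarrow> (\<And>a b c. linear_map (\<lambda>d. F a b c d)) \<Longrightarrow> quadlin F"
  by (simp add: quadlin_def)

lemma bi_l1: "bilin F \<Longrightarrow> linear_map f \<Longrightarrow> linear_map (\<lambda>a. F (f a) y)"
  unfolding bilin_def by (rule linear_map_comp[where f="\<lambda>a. F a y"]) auto
lemma bi_l2: "bilin F \<Longrightarrow> linear_map f \<Longrightarrow> linear_map (\<lambda>a. F x (f a))"
  unfolding bilin_def by (rule linear_map_comp[where f="\<lambda>a. F x a"]) auto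
lemma tri_l1: "trilin F \<Longrightarrow> linear_map f \<Longrightarrow> linear_map (\<lambda>a. F (f a) y z)"
  unfolding trilin_def by (rule linear_map_comp[where f="\<lambda>a. F a y z"]) auto
lemma tri_l2: "trilin F \<Longrightarrow> linear_map f \<Longrightarrow> linear_map (\<lambda>a. F x (f a) z)"
  unfolding trilin_def by (rule linear_map_comp[where f="\<lambda>a. F x a z"]) auto
lemma tri_l3: "trilin F \<Longrightarrow> linear_map f \<Longrightarrow> linear_map (\<lambda>a. F x y (f a))"
  unfolding trilin_def by (rule linear_map_comp[where f="\<lambda>a. F x y a"]) auto
lemma quad_l1: "quadlin F \<Longrightarrow> linear_map f \<Longrightarrow> linear_map (\<lambda>a. F (f a) y z w)"
  unfolding quadlin_def by (rule linear_map_comp[where f="\<lambda>a. F a y z w"]) auto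
lemma quad_l2: "quadlin F \<Longrightarrow> linear_map f \<Longrightarrow> linear_map (\<lambda>a. F x (f a) z w)"
  unfolding quadlin_def by (rule linear_map_comp[where f="\<lambda>a. F x a z w"]) auto
lemma quad_l3: "quadlin F \<Longrightarrow> linear_map f \<Longrightarrow> linear_map (\<lambda>a. F x y (f a) w)"
  unfolding quadlin_def by (rule linear_map_comp[where f="\<lambda>a. F x y a w"]) auto
lemma quad_l4: "quadlin F \<Longrightarrow> linear_map f \<Longrightarrow> linear_map (\<lambda>a. F x y z (f a))"
  unfolding quadlin_def by (rule linear_map_comp[where f="\<lambda>a. F x y z a"]) auto

lemma C1_commute: "linear_map L \<Longrightarrow> L (C1 G t) = C1 (\<lambda>a. L (G a)) t"
  unfolding C1_def by (rule glin_commute)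
lemma C2_commute: "linear_map L \<Longrightarrow> L (C2 G t) = C2 (\<lambda>a b. L (G a b)) t"
  unfolding C2_def by (rule glin_commute)
lemma C3_commute: "linear_map L \<Longrightarrow> L (C3 G t) = C3 (\<lambda>a b c. L (G a b c)) t"
  unfolding C3_def by (rule glin_commute)
lemma C4_commute: "linear_map L \<Longrightarrow> L (C4 G t) = C4 (\<lambda>a b c d. L (G a b c d)) t"
  unfolding C4_def by (rule glin_commute)

context QH begin



lemma in_tpow_tmap: "length fs = n \<Longrightarrow> in_tpow n x \<Longrightarrow>
   (\<And>u. length u = n \<Longrightarrow> in_tpow k (foldr tens (map2 (\<lambda>f i. f (bv i)) fs u) tunit)) \<Longrightarrow> in_tpow k (tmap fs x)"
  unfolding tmap_glin by (rule in_tpow_glin) (simp add: in_tpow_keys)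

lemma in_tpow_tens': "in_tpow n x \<Longrightarrow> in_tpow m y \<Longrightarrow> k = n + m \<Longrightarrow> in_tpow k (tens x y)"
  using in_tpow_tens by blast

lemma in_tpow_vD: "in_tpow 2 x \<Longrightarrow> in_tpow 3 (tmap [vec, Delta] x)"
  apply (rule in_tpow_tmap[where n=2], simp, assumption)
  apply (erule len2E, simp)
  apply (rule in_tpow_tens'[OF in_tpow_vec in_tpow_tens'[OF Delta_tp in_tpow_tunit]]; simp)
  done
lemma in_tpow_Dv: "in_tpow 2 x \<Longrightarrow> in_tpow 3 (tmap [Delta, vec] x)"
  apply (rule in_tpow_tmap[where n=2], simp, assumption)
  apply (erule len2E, simp)
  apply (rule in_tpow_tens'[OF Delta_tp in_tpow_tens'[OF in_tpow_vec in_tpow_tunit]]; simp)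
  done
lemma in_tpow_vvD: "in_tpow 3 x \<Longrightarrow> in_tpow 4 (tmap [vec, vec, Delta] x)"
  apply (rule in_tpow_tmap[where n=3], simp, assumption)
  apply (erule len3E, simp)
  apply (rule in_tpow_tens'[OF in_tpow_vec in_tpow_tens'[OF in_tpow_vec in_tpow_tens'[OF Delta_tp in_tpow_tunit]]]; simp)
  done
lemma in_tpow_Dvv: "in_tpow 3 x \<Longrightarrow> in_tpow 4 (tmap [Delta, vec, vec] x)"
  apply (rule in_tpow_tmap[where n=3], simp, assumption)
  apply (erule len3E, simp)
  apply (rule in_tpow_tens'[OF Delta_tp in_tpow_tens'[OF in_tpow_vec in_tpow_tens'[OF in_tpow_vec in_tpow_tunit]]]; simp)
  done
lemma in_tpow_vDv: "in_tpow 3 x \<Longrightarrow> in_tpow 4 (tmap [vec, Delta, vec] x)"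
  apply (rule in_tpow_tmap[where n=3], simp, assumption)
  apply (erule len3E, simp)
  apply (rule in_tpow_tens'[OF in_tpow_vec in_tpow_tens'[OF Delta_tp in_tpow_tens'[OF in_tpow_vec in_tpow_tunit]]]; simp)
  done
lemma in_tpow_1x: "in_tpow 3 x \<Longrightarrow> in_tpow 4 (tens (vec a) x)"
  by (rule in_tpow_tens'[OF in_tpow_vec]) simp_all
lemma in_tpow_x1: "in_tpow 3 x \<Longrightarrow> in_tpow 4 (tens x (vec a))"
  by (rule in_tpow_tens'[OF _ in_tpow_vec]) simp_all

lemma in_tpow_tprod': "length as = n \<Longrightarrow> in_tpow n (tprod as)"
  using in_tpow_tprod by blast

lemma counitL': "linear_map L \<Longrightarrow> C2 (\<lambda>a b. sc (eps a) (L b)) (Delta h) = L h"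
proof -
  assume L: "linear_map L"
  have "C1 L (tmap [\<lambda>a. Poly_Mapping.single [] (eps a), vec] (Delta h)) = C1 L (vec h)"
    by (simp only: counitL)
  then show ?thesis by (simp only: C1_tmap_ev[OF Delta_tp] C1_vec[OF L])
qed

lemma counitR': "linear_map L \<Longrightarrow> C2 (\<lambda>a b. sc (eps b) (L a)) (Delta h) = L h"
proof -
  assume L: "linear_map L"
  have "C1 L (tmap [vec, \<lambda>a. Poly_Mapping.single [] (eps a)] (Delta h)) = C1 L (vec h)"
    by (simp only: counitR)
  then show ?thesis by (simp only: C1_tmap_ve[OF Delta_tp] C1_vec[OF L])
qed

lemma ax1': "linear_map L \<Longrightarrow> C2 (\<lambda>a b. L (mult (mult (S a) alpha) b)) (Delta h) = sc (eps h) (L alpha)"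
proof -
  assume L: "linear_map L"
  have "C2 (\<lambda>a b. mult (mult (S a) alpha) b) (Delta h) = sc (eps h) alpha"
    using ax1[of h] by (simp only: lin_ext_glin C2_def)
  then have "L (C2 (\<lambda>a b. mult (mult (S a) alpha) b) (Delta h)) = L (sc (eps h) alpha)" by (rule arg_cong)
  then show ?thesis by (simp only: C2_commute[OF L] linear_map_sc[OF L])
qed
lemma ax2': "linear_map L \<Longrightarrow> C2 (\<lambda>a b. L (mult (mult a beta) (S b))) (Delta h) = sc (eps h) (L beta)"
proof -
  assume L: "linear_map L"
  have "C2 (\<lambda>a b. mult (mult a beta) (S b)) (Delta h) = sc (eps h) beta"
    using ax2[of h] by (simp only: lin_ext_glin C2_def)
  then have "L (C2 (\<lambda>a b. mult (mult a beta) (S b)) (Delta h)) = L (sc (eps h) beta)" by (rule arg_cong)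
  then show ?thesis by (simp only: C2_commute[OF L] linear_map_sc[OF L])
qed
lemma ax3': "linear_map L \<Longrightarrow> C3 (\<lambda>a b c. L (mult (mult (mult (mult a beta) (S b)) alpha) c)) phi = L one"
proof -
  assume L: "linear_map L"
  have "C3 (\<lambda>a b c. mult (mult (mult (mult a beta) (S b)) alpha) c) phi = one"
    using ax3 by (simp only: lin_ext_glin C3_def)
  then have "L (C3 (\<lambda>a b c. mult (mult (mult (mult a beta) (S b)) alpha) c) phi) = L one" by (rule arg_cong)
  then show ?thesis by (simp only: C3_commute[OF L])
qed
lemma ax4': "linear_map L \<Longrightarrow> C3 (\<lambda>a b c. L (mult (mult (mult (mult (S a) alpha) b) beta) (S c))) phinv = L one"
proof -
  assume L: "linear_map L"
  have "C3 (\<lambda>a b c. mult (mult (mult (mult (S a) alpha) b) beta) (S c)) phinv = one"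
    using ax4 by (simp only: lin_ext_glin C3_def)
  then have "L (C3 (\<lambda>a b c. mult (mult (mult (mult (S a) alpha) b) beta) (S c)) phinv) = L one" by (rule arg_cong)
  then show ?thesis by (simp only: C3_commute[OF L])
qed

lemma normal': "bilin G \<Longrightarrow> C3 (\<lambda>a b c. sc (eps b) (G a c)) phi = G one one"
proof -
  assume G: "bilin G"
  have "C2 G (tmap [vec, \<lambda>a. Poly_Mapping.single [] (eps a), vec] phi) = C2 G (tprod [one, one])"
    by (simp only: normal)
  then show ?thesis by (simp only: C2_tmap_vev[OF phi_tp] C2_tprod[OF G])
qed

lemma coassoc': "trilin F \<Longrightarrow>
  C2 (\<lambda>a b. C2 (\<lambda>b1 b2. C3 (\<lambda>p1 p2 p3. F (mult a p1) (mult b1 p2) (mult b2 p3)) phi) (Delta b)) (Delta h)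
  = C3 (\<lambda>p1 p2 p3. C2 (\<lambda>a b. C2 (\<lambda>a1 a2. F (mult p1 a1) (mult p2 a2) (mult p3 b)) (Delta a)) (Delta h)) phi"
proof -
  assume F: "trilin F"
  have "C3 F (mulT mult (tmap [vec, Delta] (Delta h)) phi) = C3 F (mulT mult phi (tmap [Delta, vec] (Delta h)))"
    by (simp only: coassoc)
  then show ?thesis
    by (simp only: C3_mulT[OF in_tpow_vD[OF Delta_tp] phi_tp F] C3_mulT[OF phi_tp in_tpow_Dv[OF Delta_tp] F]
       C3_tmap_vD[OF Delta_tp] C3_tmap_Dv[OF Delta_tp])
qed

end

context QH begin

lemma pent':
  assumes q: "quadlin Q"
  shows "C3 (\<lambda>p1 p2 p3. C2 (\<lambda>c1 c2. C3 (\<lambda>r1 r2 r3. C2 (\<lambda>a1 a2.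
      Q (mult p1 a1) (mult p2 a2) (mult c1 r2) (mult c2 r3)) (Delta r1)) phi) (Delta p3)) phi
   = C3 (\<lambda>e1 e2 e3. C3 (\<lambda>d1 d2 d3. C2 (\<lambda>m1 m2. C3 (\<lambda>f1 f2 f3.
      Q (mult (mult one d1) f1) (mult (mult e1 m1) f2) (mult (mult e2 m2) f3) (mult (mult e3 d3) one)) phi) (Delta d2)) phi) phi"
proof -
  let ?A = "tmap [vec, vec, Delta] phi" and ?B = "tmap [Delta, vec, vec] phi" and ?E1 = "tens (vec one) phi"
    and ?D = "tmap [vec, Delta, vec] phi" and ?E2 = "tens phi (vec one)"
  have eq: "C4 Q (mulT mult ?A ?B) = C4 Q (mulT mult (mulT mult ?E1 ?D) ?E2)" by (simp only: pentagon)
  have L: "C4 Q (mulT mult ?A ?B) = C3 (\<lambda>p1 p2 p3. C2 (\<lambda>c1 c2. C3 (\<lambda>r1 r2 r3. C2 (\<lambda>a1 a2.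
      Q (mult p1 a1) (mult p2 a2) (mult c1 r2) (mult c2 r3)) (Delta r1)) phi) (Delta p3)) phi"
    by (simp only: C4_mulT[OF in_tpow_vvD[OF phi_tp] in_tpow_Dvv[OF phi_tp] q] C4_tmap_vvD[OF phi_tp] C4_tmap_Dvv[OF phi_tp])
  define T where "T = (\<lambda>a b c d. C4 (\<lambda>a' b' c' d'. Q (mult a a') (mult b b') (mult c c') (mult d d')) ?E2)"
  have qT: "quadlin T" unfolding T_def
    by (intro quadlinI) (simp_all add: lin_rules quad_l1[OF q] quad_l2[OF q] quad_l3[OF q] quad_l4[OF q])
  have E2: "\<And>x y z w. C4 (\<lambda>a' b' c' d'. Q (mult x a') (mult y b') (mult z c') (mult w d')) ?E2
      = C3 (\<lambda>f1 f2 f3. Q (mult x f1) (mult y f2) (mult z f3) (mult w one)) phi"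
    by (rule C4_tens_x1[OF phi_tp]) (simp add: lin_rules quad_l4[OF q])
  have R1: "C4 Q (mulT mult (mulT mult ?E1 ?D) ?E2) = C4 T (mulT mult ?E1 ?D)"
    unfolding T_def by (rule C4_mulT[OF in_tpow_mulT[OF in_tpow_1x[OF phi_tp] in_tpow_vDv[OF phi_tp]] in_tpow_x1[OF phi_tp] q])
  have R2: "C4 T (mulT mult ?E1 ?D) = C4 (\<lambda>a b c d. C4 (\<lambda>a' b' c' d'. T (mult a a') (mult b b') (mult c c') (mult d d')) ?D) ?E1"
    by (rule C4_mulT[OF in_tpow_1x[OF phi_tp] in_tpow_vDv[OF phi_tp] qT])
  have R3: "\<dots> = C3 (\<lambda>e1 e2 e3. C4 (\<lambda>a' b' c' d'. T (mult one a') (mult e1 b') (mult e2 c') (mult e3 d')) ?D) phi"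
    by (rule C4_tens_1x) (simp add: lin_rules quad_l1[OF qT])
  have R4: "\<dots> = C3 (\<lambda>e1 e2 e3. C3 (\<lambda>d1 d2 d3. C2 (\<lambda>m1 m2. C3 (\<lambda>f1 f2 f3.
      Q (mult (mult one d1) f1) (mult (mult e1 m1) f2) (mult (mult e2 m2) f3) (mult (mult e3 d3) one)) phi) (Delta d2)) phi) phi"
    by (simp only: C4_tmap_vDv[OF phi_tp] T_def E2)
  show ?thesis using eq L R1 R2 R3 R4 by simp
qed

lemma sc_split: "sc (a * b) x = sc a (sc b x)" by simp
lemma C1_sc_out: "C1 (\<lambda>a. sc c (G a)) t = sc c (C1 G t)"
  unfolding C1_def by (rule glin_fsc)
lemma C2_sc_out: "C2 (\<lambda>a b. sc c (G a b)) t = sc c (C2 G t)"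
  unfolding C2_def by (rule glin_fsc)
lemma C3_sc_out: "C3 (\<lambda>a b c'. sc c (G a b c')) t = sc c (C3 G t)"
  unfolding C3_def by (rule glin_fsc)
lemma C4_sc_out: "C4 (\<lambda>a b c' d. sc c (G a b c' d)) t = sc c (C4 G t)"
  unfolding C4_def by (rule glin_fsc)
lemmas sc_outs = C1_sc_out C2_sc_out C3_sc_out C4_sc_out

lemma bilin_iff: "bilin F = ((\<forall>b. linear_map (\<lambda>a. F a b)) \<and> (\<forall>a. linear_map (\<lambda>b. F a b)))"
  by (simp add: bilin_def)
lemma trilin_iff: "trilin F = ((\<forall>b c. linear_map (\<lambda>a. F a b c)) \<and> (\<forall>a c. linear_map (\<lambda>b. F a b c))
   \<and> (\<forall>a b. linear_map (\<lambda>c. F a b c)))"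
  by (simp add: trilin_def)

lemma starA:
  assumes t: "trilin P"
  shows "C3 P phi = C3 (\<lambda>e1 e2 e3. sc (eps e1) (C3 (\<lambda>d1 d2 d3. P d1 (mult e2 d2) (mult e3 d3)) phi)) phi"
proof -
  have q: "quadlin (\<lambda>a b c d. sc (eps b) (P a c d))"
    by (intro quadlinI) (simp_all add: lin_rules tri_l1[OF t] tri_l2[OF t] tri_l3[OF t])
  note pent'[OF q]
  have L: "C3 (\<lambda>p1 p2 p3. C2 (\<lambda>c1 c2. C3 (\<lambda>r1 r2 r3. C2 (\<lambda>a1 a2.
      sc (eps (mult p2 a2)) (P (mult p1 a1) (mult c1 r2) (mult c2 r3))) (Delta r1)) phi) (Delta p3)) phi = C3 P phi"
    by (simp del: sc_sc add: eps_mult sc_split sc_outs counitR' normal' counitL' Delta_one C2_tprod bilin_iff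
        lin_rules tri_l1[OF t] tri_l2[OF t] tri_l3[OF t])
  have R: "C3 (\<lambda>e1 e2 e3. C3 (\<lambda>d1 d2 d3. C2 (\<lambda>m1 m2. C3 (\<lambda>f1 f2 f3.
      sc (eps (mult (mult e1 m1) f2)) (P (mult (mult one d1) f1) (mult (mult e2 m2) f3) (mult (mult e3 d3) one))) phi) (Delta d2)) phi) phi
     = C3 (\<lambda>e1 e2 e3. sc (eps e1) (C3 (\<lambda>d1 d2 d3. P d1 (mult e2 d2) (mult e3 d3)) phi)) phi"
    by (simp del: sc_sc add: eps_mult sc_split sc_outs counitR' normal' counitL' Delta_one C2_tprod bilin_iff
        lin_rules tri_l1[OF t] tri_l2[OF t] tri_l3[OF t])
  show ?thesis using pent'[OF q] L R by simp
qed

lemma inv1: "trilin F \<Longrightarrow> C3 (\<lambda>a b c. C3 (\<lambda>a' b' c'. F (mult a a') (mult b b') (mult c c')) phinv) phi = F one one one"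
proof -
  assume F: "trilin F"
  have "C3 (\<lambda>a b c. C3 (\<lambda>a' b' c'. F (mult a a') (mult b b') (mult c c')) phinv) phi = C3 F (mulT mult phi phinv)"
    by (rule C3_mulT[OF phi_tp phinv_tp F, symmetric])
  also have "\<dots> = F one one one" by (simp only: phi_inv1 C3_tprod[OF F])
  finally show ?thesis .
qed
lemma inv2: "trilin F \<Longrightarrow> C3 (\<lambda>a b c. C3 (\<lambda>a' b' c'. F (mult a a') (mult b b') (mult c c')) phi) phinv = F one one one"
proof -
  assume F: "trilin F"
  have "C3 (\<lambda>a b c. C3 (\<lambda>a' b' c'. F (mult a a') (mult b b') (mult c c')) phi) phinv = C3 F (mulT mult phinv phi)"
    by (rule C3_mulT[OF phinv_tp phi_tp F, symmetric])
  also have "\<dots> = F one one one" by (simp only: phi_inv2 C3_tprod[OF F])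
  finally show ?thesis .
qed

lemma C3_swap: "C3 (\<lambda>a b c. C3 (\<lambda>x y z. F a b c x y z) t2) t1 = C3 (\<lambda>x y z. C3 (\<lambda>a b c. F a b c x y z) t1) t2"
  unfolding C3_def by (rule glin_swap)
lemma C2_swap: "C2 (\<lambda>a b. C2 (\<lambda>x y. F a b x y) t2) t1 = C2 (\<lambda>x y. C2 (\<lambda>a b. F a b x y) t1) t2"
  unfolding C2_def by (rule glin_swap)
lemma C23_swap: "C2 (\<lambda>a b. C3 (\<lambda>x y z. F a b x y z) t2) t1 = C3 (\<lambda>x y z. C2 (\<lambda>a b. F a b x y z) t1) t2"
  unfolding C2_def C3_def by (rule glin_swap)

lemma NL:
  assumes G: "bilin G"
  shows "C3 (\<lambda>a b c. sc (eps a) (G b c)) phi = G one one"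
proof -
  define P where "P = (\<lambda>a b c. C3 (\<lambda>z1 z2 z3. sc (eps (mult a z1)) (G (mult b z2) (mult c z3))) phinv)"
  have tP: "trilin P" unfolding P_def
    by (intro trilinI) (simp_all add: lin_rules bi_l1[OF G] bi_l2[OF G])
  have tG1: "trilin (\<lambda>x y z. sc (eps x) (G y z))"
    by (intro trilinI) (simp_all add: lin_rules bi_l1[OF G] bi_l2[OF G])
  have 1: "C3 P phi = G one one"
    unfolding P_def using inv1[OF tG1] by (simp add: eps_one)
  have 2: "C3 (\<lambda>d1 d2 d3. P d1 (mult e2 d2) (mult e3 d3)) phi = G e2 e3" for e2 e3
  proof -
    have tG2: "trilin (\<lambda>x y z. sc (eps x) (G (mult e2 y) (mult e3 z)))"
      by (intro trilinI) (simp_all add: lin_rules bi_l1[OF G] bi_l2[OF G])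
    show ?thesis unfolding P_def using inv1[OF tG2] by (simp add: eps_one assoc)
  qed
  show ?thesis using starA[OF tP] 1 2 by simp
qed

end

context QH begin

lemma starB:
  assumes t: "trilin P"
  shows "C3 P phi = C3 (\<lambda>d1 d2 d3. C3 (\<lambda>f1 f2 f3. sc (eps f3) (P (mult d1 f1) (mult d2 f2) d3)) phi) phi"
proof -
  have q: "quadlin (\<lambda>a b c d. sc (eps c) (P a b d))"
    by (intro quadlinI) (simp_all add: lin_rules tri_l1[OF t] tri_l2[OF t] tri_l3[OF t])
  have L: "C3 (\<lambda>p1 p2 p3. C2 (\<lambda>c1 c2. C3 (\<lambda>r1 r2 r3. C2 (\<lambda>a1 a2.
      sc (eps (mult c1 r2)) (P (mult p1 a1) (mult p2 a2) (mult c2 r3))) (Delta r1)) phi) (Delta p3)) phi = C3 P phi"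
    by (simp del: sc_sc add: eps_mult sc_split sc_outs counitR' normal' counitL' Delta_one C2_tprod bilin_iff
        lin_rules tri_l1[OF t] tri_l2[OF t] tri_l3[OF t])
  have R: "C3 (\<lambda>e1 e2 e3. C3 (\<lambda>d1 d2 d3. C2 (\<lambda>m1 m2. C3 (\<lambda>f1 f2 f3.
      sc (eps (mult (mult e2 m2) f3)) (P (mult (mult one d1) f1) (mult (mult e1 m1) f2) (mult (mult e3 d3) one))) phi) (Delta d2)) phi) phi
     = C3 (\<lambda>d1 d2 d3. C3 (\<lambda>f1 f2 f3. sc (eps f3) (P (mult d1 f1) (mult d2 f2) d3)) phi) phi"
    by (simp del: sc_sc add: eps_mult sc_split sc_outs counitR' normal' counitL' Delta_one C2_tprod bilin_iff
        lin_rules tri_l1[OF t] tri_l2[OF t] tri_l3[OF t])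
  show ?thesis using pent'[OF q] L R by simp
qed

lemma NR:
  assumes G: "bilin G"
  shows "C3 (\<lambda>a b c. sc (eps c) (G a b)) phi = G one one"
proof -
  define P where "P = (\<lambda>a b c. C3 (\<lambda>z1 z2 z3. sc (eps (mult z3 c)) (G (mult z1 a) (mult z2 b))) phinv)"
  have tP: "trilin P" unfolding P_def
    by (intro trilinI) (simp_all add: lin_rules bi_l1[OF G] bi_l2[OF G])
  have tG1: "trilin (\<lambda>x y z. sc (eps z) (G x y))"
    by (intro trilinI) (simp_all add: lin_rules bi_l1[OF G] bi_l2[OF G])
  have 1: "C3 P phi = G one one"
  proof -
    have "C3 P phi = C3 (\<lambda>a b c. C3 (\<lambda>z1 z2 z3. sc (eps (mult z3 c)) (G (mult z1 a) (mult z2 b))) phinv) phi"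
      by (simp only: P_def)
    also have "\<dots> = C3 (\<lambda>z1 z2 z3. C3 (\<lambda>a b c. sc (eps (mult z3 c)) (G (mult z1 a) (mult z2 b))) phi) phinv"
      by (rule C3_swap)
    also have "\<dots> = G one one" using inv2[OF tG1] by (simp add: eps_one)
    finally show ?thesis .
  qed
  have 2: "C3 (\<lambda>d1 d2 d3. C3 (\<lambda>f1 f2 f3. sc (eps f3) (P (mult d1 f1) (mult d2 f2) d3)) phi) phi
     = C3 (\<lambda>f1 f2 f3. sc (eps f3) (G f1 f2)) phi"
  proof -
    have "C3 (\<lambda>d1 d2 d3. C3 (\<lambda>f1 f2 f3. sc (eps f3) (P (mult d1 f1) (mult d2 f2) d3)) phi) phi
       = C3 (\<lambda>d1 d2 d3. C3 (\<lambda>f1 f2 f3. C3 (\<lambda>z1 z2 z3. sc (eps f3) (sc (eps (mult z3 d3))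
            (G (mult z1 (mult d1 f1)) (mult z2 (mult d2 f2))))) phinv) phi) phi"
      by (simp only: P_def C3_sc_out[symmetric])
    also have "\<dots> = C3 (\<lambda>f1 f2 f3. C3 (\<lambda>d1 d2 d3. C3 (\<lambda>z1 z2 z3. sc (eps f3) (sc (eps (mult z3 d3))
            (G (mult z1 (mult d1 f1)) (mult z2 (mult d2 f2))))) phinv) phi) phi"
      by (rule C3_swap)
    also have "\<dots> = C3 (\<lambda>f1 f2 f3. C3 (\<lambda>z1 z2 z3. C3 (\<lambda>d1 d2 d3. sc (eps f3) (sc (eps (mult z3 d3))
            (G (mult z1 (mult d1 f1)) (mult z2 (mult d2 f2))))) phi) phinv) phi"
      by (simp only: C3_swap[of _ phinv phi])
    also have "\<dots> = C3 (\<lambda>f1 f2 f3. sc (eps f3) (G f1 f2)) phi"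
    proof -
      have "C3 (\<lambda>z1 z2 z3. C3 (\<lambda>d1 d2 d3. sc (eps f3) (sc (eps (mult z3 d3))
            (G (mult z1 (mult d1 f1)) (mult z2 (mult d2 f2))))) phi) phinv = sc (eps f3) (G f1 f2)" for f1 f2 f3
      proof -
        have tW: "trilin (\<lambda>x y w. sc (eps f3) (sc (eps w) (G (mult x f1) (mult y f2))))"
          by (intro trilinI) (simp_all del: sc_sc add: lin_rules bi_l1[OF G] bi_l2[OF G])
        show ?thesis using inv2[OF tW] by (simp add: eps_one assoc)
      qed
      then show ?thesis by simp
    qed
    finally show ?thesis .
  qed
  show ?thesis using starB[OF tP] 1 2 by simp
qed

end

context QH begin

lemma NMi:
  assumes G: "bilin G"
  shows "C3 (\<lambda>a b c. sc (eps b) (G a c)) phinv = G one one"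
proof -
  have tG: "trilin (\<lambda>x y z. sc (eps y) (G x z))"
    by (intro trilinI) (simp_all add: lin_rules bi_l1[OF G] bi_l2[OF G])
  have "G one one = C3 (\<lambda>a b c. C3 (\<lambda>a' b' c'. sc (eps (mult b b')) (G (mult a a') (mult c c'))) phinv) phi"
    using inv1[OF tG] by (simp add: eps_one)
  also have "\<dots> = C3 (\<lambda>a' b' c'. C3 (\<lambda>a b c. sc (eps (mult b b')) (G (mult a a') (mult c c'))) phi) phinv"
    by (rule C3_swap)
  also have "\<dots> = C3 (\<lambda>a b c. sc (eps b) (G a c)) phinv"
    by (simp del: sc_sc add: eps_mult mult.commute[of "eps _" "eps _"] sc_split sc_outs normal' bilin_iff
        lin_rules bi_l1[OF G] bi_l2[OF G])
  finally show ?thesis by simp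
qed

lemma NRi:
  assumes G: "bilin G"
  shows "C3 (\<lambda>a b c. sc (eps c) (G a b)) phinv = G one one"
proof -
  have tG: "trilin (\<lambda>x y z. sc (eps z) (G x y))"
    by (intro trilinI) (simp_all add: lin_rules bi_l1[OF G] bi_l2[OF G])
  have "G one one = C3 (\<lambda>a b c. C3 (\<lambda>a' b' c'. sc (eps (mult c c')) (G (mult a a') (mult b b'))) phinv) phi"
    using inv1[OF tG] by (simp add: eps_one)
  also have "\<dots> = C3 (\<lambda>a' b' c'. C3 (\<lambda>a b c. sc (eps (mult c c')) (G (mult a a') (mult b b'))) phi) phinv"
    by (rule C3_swap)
  also have "\<dots> = C3 (\<lambda>a b c. sc (eps c) (G a b)) phinv"
    by (simp del: sc_sc add: eps_mult mult.commute[of "eps _" "eps _"] sc_split sc_outs NR bilin_iff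
        lin_rules bi_l1[OF G] bi_l2[OF G])
  finally show ?thesis by simp
qed

lemma quadlin_iff: "quadlin F = ((\<forall>b c d. linear_map (\<lambda>a. F a b c d)) \<and> (\<forall>a c d. linear_map (\<lambda>b. F a b c d))
   \<and> (\<forall>a b d. linear_map (\<lambda>c. F a b c d)) \<and> (\<forall>a b c. linear_map (\<lambda>d. F a b c d)))"
  by (simp add: quadlin_def)

lemma tp4_quad: "quadlin (\<lambda>a b c d. tprod [a, b, c, d])"
  by (intro quadlinI) (simp_all add: lin_rules)

lemma tens_eqI4:
  fixes X Y :: "('b, 'k::field) tens"
  assumes "in_tpow 4 X" "in_tpow 4 Y"
    and "\<And>N :: ('b,'k) hvec \<Rightarrow> ('b,'k) hvec \<Rightarrow> ('b,'k) hvec \<Rightarrow> ('b,'k) hvec \<Rightarrow> ('b,'k) tens.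
       quadlin N \<Longrightarrow> C4 N X = C4 N Y"
  shows "X = Y"
proof -
  have "X = C4 (\<lambda>a b c d. tprod [a, b, c, d]) X" by (rule ident4[OF assms(1), symmetric])
  also have "\<dots> = C4 (\<lambda>a b c d. tprod [a, b, c, d]) Y" by (rule assms(3)[OF tp4_quad])
  also have "\<dots> = Y" by (rule ident4[OF assms(2)])
  finally show ?thesis .
qed

lemma mulT_assoc4:
  assumes x: "in_tpow 4 x" and y: "in_tpow 4 y" and z: "in_tpow 4 z"
  shows "mulT mult (mulT mult x y) z = mulT mult x (mulT mult y z)"
proof (rule tens_eqI4)
  show "in_tpow 4 (mulT mult (mulT mult x y) z)" by (intro in_tpow_mulT x y z)
  show "in_tpow 4 (mulT mult x (mulT mult y z))" by (intro in_tpow_mulT x y z)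
  fix N :: "('b,'k) hvec \<Rightarrow> ('b,'k) hvec \<Rightarrow> ('b,'k) hvec \<Rightarrow> ('b,'k) hvec \<Rightarrow> ('b,'k) tens"
  assume q: "quadlin N"
  show "C4 N (mulT mult (mulT mult x y) z) = C4 N (mulT mult x (mulT mult y z))"
    by (simp add: C4_mulT in_tpow_mulT x y z q quadlin_iff lin_rules quad_l1[OF q] quad_l2[OF q] quad_l3[OF q] quad_l4[OF q] assoc)
qed

lemma one4_tp: "in_tpow 4 (tprod [one, one, one, one])"
  by (rule in_tpow_tprod') simp

lemma mulT_one4_l:
  assumes x: "in_tpow 4 x"
  shows "mulT mult (tprod [one, one, one, one]) x = x"
proof (rule tens_eqI4)
  show "in_tpow 4 (mulT mult (tprod [one, one, one, one]) x)" by (intro in_tpow_mulT x one4_tp)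
  show "in_tpow 4 x" by fact
  fix N :: "('b,'k) hvec \<Rightarrow> ('b,'k) hvec \<Rightarrow> ('b,'k) hvec \<Rightarrow> ('b,'k) hvec \<Rightarrow> ('b,'k) tens"
  assume q: "quadlin N"
  show "C4 N (mulT mult (tprod [one, one, one, one]) x) = C4 N x"
    by (simp add: C4_mulT x one4_tp q quadlin_iff lin_rules quad_l1[OF q] quad_l2[OF q] quad_l3[OF q] quad_l4[OF q] C4_tprod)
qed

lemma mulT_one4_r:
  assumes x: "in_tpow 4 x"
  shows "mulT mult x (tprod [one, one, one, one]) = x"
proof (rule tens_eqI4)
  show "in_tpow 4 (mulT mult x (tprod [one, one, one, one]))" by (intro in_tpow_mulT x one4_tp)
  show "in_tpow 4 x" by fact
  fix N :: "('b,'k) hvec \<Rightarrow> ('b,'k) hvec \<Rightarrow> ('b,'k) hvec \<Rightarrow> ('b,'k) hvec \<Rightarrow> ('b,'k) tens"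
  assume q: "quadlin N"
  show "C4 N (mulT mult x (tprod [one, one, one, one])) = C4 N x"
    by (simp add: C4_mulT x one4_tp q quadlin_iff lin_rules quad_l1[OF q] quad_l2[OF q] quad_l3[OF q] quad_l4[OF q] C4_tprod)
qed

lemma TA_one: "mulT mult (tmap [vec, vec, Delta] phinv) (tmap [vec, vec, Delta] phi) = tprod [one, one, one, one]"
proof (rule tens_eqI4)
  show "in_tpow 4 (mulT mult (tmap [vec, vec, Delta] phinv) (tmap [vec, vec, Delta] phi))"
    by (rule in_tpow_mulT[OF in_tpow_vvD[OF phinv_tp] in_tpow_vvD[OF phi_tp]])
  show "in_tpow 4 (tprod [one, one, one, one])" by (rule one4_tp)
  fix N :: "('b,'k) hvec \<Rightarrow> ('b,'k) hvec \<Rightarrow> ('b,'k) hvec \<Rightarrow> ('b,'k) hvec \<Rightarrow> ('b,'k) tens"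
  assume q: "quadlin N"
  have "C4 N (mulT mult (tmap [vec, vec, Delta] phinv) (tmap [vec, vec, Delta] phi))
     = C3 (\<lambda>x1 x2 x3. C2 (\<lambda>s1 s2. C3 (\<lambda>p1 p2 p3. C2 (\<lambda>c1 c2.
         N (mult x1 p1) (mult x2 p2) (mult s1 c1) (mult s2 c2)) (Delta p3)) phi) (Delta x3)) phinv"
    by (simp only: C4_mulT[OF in_tpow_vvD[OF phinv_tp] in_tpow_vvD[OF phi_tp] q] C4_tmap_vvD[OF phinv_tp] C4_tmap_vvD[OF phi_tp])
  also have "\<dots> = C3 (\<lambda>x1 x2 x3. C3 (\<lambda>p1 p2 p3. C2 (\<lambda>s1 s2. C2 (\<lambda>c1 c2.
         N (mult x1 p1) (mult x2 p2) (mult s1 c1) (mult s2 c2)) (Delta p3)) (Delta x3)) phi) phinv"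
    by (simp only: C23_swap)
  also have "\<dots> = C3 (\<lambda>x1 x2 x3. C3 (\<lambda>p1 p2 p3. C2 (\<lambda>u1 u2.
         N (mult x1 p1) (mult x2 p2) u1 u2) (Delta (mult x3 p3))) phi) phinv"
    by (simp add: Delta_mult C2_mulT Delta_tp bilin_iff lin_rules quad_l1[OF q] quad_l2[OF q] quad_l3[OF q] quad_l4[OF q])
  also have "\<dots> = C2 (\<lambda>u1 u2. N one one u1 u2) (Delta one)"
    by (rule inv2) (intro trilinI; simp add: lin_rules quad_l1[OF q] quad_l2[OF q] quad_l3[OF q] quad_l4[OF q])
  also have "\<dots> = C4 N (tprod [one, one, one, one])"
    by (simp add: Delta_one C2_tprod C4_tprod[OF q] bilin_iff lin_rules quad_l1[OF q] quad_l2[OF q] quad_l3[OF q] quad_l4[OF q])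
  finally show "C4 N (mulT mult (tmap [vec, vec, Delta] phinv) (tmap [vec, vec, Delta] phi)) = C4 N (tprod [one, one, one, one])" .
qed

lemma E2_one: "mulT mult (tens phi (vec one)) (tens phinv (vec one)) = tprod [one, one, one, one]"
proof (rule tens_eqI4)
  show "in_tpow 4 (mulT mult (tens phi (vec one)) (tens phinv (vec one)))"
    by (rule in_tpow_mulT[OF in_tpow_x1[OF phi_tp] in_tpow_x1[OF phinv_tp]])
  show "in_tpow 4 (tprod [one, one, one, one])" by (rule one4_tp)
  fix N :: "('b,'k) hvec \<Rightarrow> ('b,'k) hvec \<Rightarrow> ('b,'k) hvec \<Rightarrow> ('b,'k) hvec \<Rightarrow> ('b,'k) tens"
  assume q: "quadlin N"
  have "C4 N (mulT mult (tens phi (vec one)) (tens phinv (vec one)))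
     = C3 (\<lambda>p1 p2 p3. C3 (\<lambda>x1 x2 x3. N (mult p1 x1) (mult p2 x2) (mult p3 x3) (mult one one)) phinv) phi"
    by (simp del: one_l one_r add: C4_mulT[OF in_tpow_x1[OF phi_tp] in_tpow_x1[OF phinv_tp] q] C4_tens_x1 phi_tp phinv_tp
       lin_rules quad_l1[OF q] quad_l2[OF q] quad_l3[OF q] quad_l4[OF q])
  also have "\<dots> = N one one one (mult one one)"
    by (rule inv1) (intro trilinI; simp add: lin_rules quad_l1[OF q] quad_l2[OF q] quad_l3[OF q] quad_l4[OF q])
  also have "\<dots> = C4 N (tprod [one, one, one, one])"
    by (simp add: C4_tprod[OF q])
  finally show "C4 N (mulT mult (tens phi (vec one)) (tens phinv (vec one))) = C4 N (tprod [one, one, one, one])" .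
qed

lemma D_one: "mulT mult (tmap [vec, Delta, vec] phi) (tmap [vec, Delta, vec] phinv) = tprod [one, one, one, one]"
proof (rule tens_eqI4)
  show "in_tpow 4 (mulT mult (tmap [vec, Delta, vec] phi) (tmap [vec, Delta, vec] phinv))"
    by (rule in_tpow_mulT[OF in_tpow_vDv[OF phi_tp] in_tpow_vDv[OF phinv_tp]])
  show "in_tpow 4 (tprod [one, one, one, one])" by (rule one4_tp)
  fix N :: "('b,'k) hvec \<Rightarrow> ('b,'k) hvec \<Rightarrow> ('b,'k) hvec \<Rightarrow> ('b,'k) hvec \<Rightarrow> ('b,'k) tens"
  assume q: "quadlin N"
  have "C4 N (mulT mult (tmap [vec, Delta, vec] phi) (tmap [vec, Delta, vec] phinv))
     = C3 (\<lambda>p1 p2 p3. C2 (\<lambda>b1 b2. C3 (\<lambda>x1 x2 x3. C2 (\<lambda>c1 c2.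
         N (mult p1 x1) (mult b1 c1) (mult b2 c2) (mult p3 x3)) (Delta x2)) phinv) (Delta p2)) phi"
    by (simp only: C4_mulT[OF in_tpow_vDv[OF phi_tp] in_tpow_vDv[OF phinv_tp] q] C4_tmap_vDv[OF phi_tp] C4_tmap_vDv[OF phinv_tp])
  also have "\<dots> = C3 (\<lambda>p1 p2 p3. C3 (\<lambda>x1 x2 x3. C2 (\<lambda>b1 b2. C2 (\<lambda>c1 c2.
         N (mult p1 x1) (mult b1 c1) (mult b2 c2) (mult p3 x3)) (Delta x2)) (Delta p2)) phinv) phi"
    by (simp only: C23_swap)
  also have "\<dots> = C3 (\<lambda>p1 p2 p3. C3 (\<lambda>x1 x2 x3. C2 (\<lambda>u1 u2.
         N (mult p1 x1) u1 u2 (mult p3 x3)) (Delta (mult p2 x2))) phinv) phi"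
    by (simp add: Delta_mult C2_mulT Delta_tp bilin_iff lin_rules quad_l1[OF q] quad_l2[OF q] quad_l3[OF q] quad_l4[OF q])
  also have "\<dots> = C2 (\<lambda>u1 u2. N one u1 u2 one) (Delta one)"
    by (rule inv1[where F="\<lambda>a b c. C2 (\<lambda>u1 u2. N a u1 u2 c) (Delta b)"]) (intro trilinI; simp add: lin_rules quad_l1[OF q] quad_l2[OF q] quad_l3[OF q] quad_l4[OF q])
  also have "\<dots> = C4 N (tprod [one, one, one, one])"
    by (simp add: Delta_one C2_tprod C4_tprod[OF q] bilin_iff lin_rules quad_l1[OF q] quad_l2[OF q] quad_l3[OF q] quad_l4[OF q])
  finally show "C4 N (mulT mult (tmap [vec, Delta, vec] phi) (tmap [vec, Delta, vec] phinv)) = C4 N (tprod [one, one, one, one])" .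
qed

lemma key_tensor:
  "mulT mult (tmap [vec, vec, Delta] phinv) (tens (vec one) phi)
   = mulT mult (tmap [Delta, vec, vec] phi) (mulT mult (tens phinv (vec one)) (tmap [vec, Delta, vec] phinv))"
proof -
  let ?T = "tmap [vec, vec, Delta] phinv" and ?A = "tmap [vec, vec, Delta] phi" and ?B = "tmap [Delta, vec, vec] phi"
    and ?E1 = "tens (vec one) phi" and ?D = "tmap [vec, Delta, vec] phi" and ?E2 = "tens phi (vec one)"
    and ?E2i = "tens phinv (vec one)" and ?Di = "tmap [vec, Delta, vec] phinv"
  have tp: "in_tpow 4 ?T" "in_tpow 4 ?A" "in_tpow 4 ?B" "in_tpow 4 ?E1" "in_tpow 4 ?D" "in_tpow 4 ?E2"
     "in_tpow 4 ?E2i" "in_tpow 4 ?Di"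
    by (simp_all add: in_tpow_vvD in_tpow_Dvv in_tpow_vDv in_tpow_1x in_tpow_x1 phi_tp phinv_tp)
  note tps = tp in_tpow_mulT one4_tp
  have B: "?B = mulT mult ?T (mulT mult ?E1 (mulT mult ?D ?E2))"
  proof -
    have "mulT mult ?T (mulT mult ?E1 (mulT mult ?D ?E2)) = mulT mult ?T (mulT mult (mulT mult ?E1 ?D) ?E2)"
      by (simp only: mulT_assoc4 tps)
    also have "\<dots> = mulT mult ?T (mulT mult ?A ?B)" by (simp only: pentagon)
    also have "\<dots> = mulT mult (mulT mult ?T ?A) ?B" by (simp only: mulT_assoc4 tps)
    also have "\<dots> = ?B" by (simp only: TA_one mulT_one4_l tps)
    finally show ?thesis by simp
  qed
  have c1: "mulT mult ?E2 (mulT mult ?E2i ?Di) = ?Di"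
    by (simp only: mulT_assoc4[symmetric] tps E2_one mulT_one4_l)
  have "mulT mult ?B (mulT mult ?E2i ?Di) = mulT mult ?T (mulT mult ?E1 (mulT mult ?D (mulT mult ?E2 (mulT mult ?E2i ?Di))))"
    by (subst B) (simp only: mulT_assoc4 tps)
  also have "\<dots> = mulT mult ?T ?E1"
    by (simp only: c1 D_one mulT_one4_r tps)
  finally show ?thesis by simp
qed

end

lemma C2_tens_vec: "bilin G \<Longrightarrow> C2 G (tens (vec a) (vec b)) = G a b"
  unfolding C2_def
  apply (simp only: glin_tens glin_vec nth_Cons_0 append_Cons append_Nil)
  apply (simp add: bilin_def lin_collapse[where F="\<lambda>x. G x b"] lin_collapse[where F="\<lambda>x. G _ x"])
  done

context QH begin

definition "qL = lin_ext (\<lambda>u. tens (vec (mult (mult (S (bv (u!0))) alpha) (bv (u!1)))) (vec (bv (u!2)))) phinv"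
definition "can w = C2 (\<lambda>x y. mulT mult (mulT mult (tprod [x, one]) qL) (Delta y)) w"
definition "E0 z = C2 (\<lambda>a b. C3 (\<lambda>p1 p2 p3. C2 (\<lambda>b1 b2. tprod [mult (mult (mult (mult a p1) beta) (S p2)) (S b1), mult b2 p3]) (Delta b)) phi) z"

lemma qL_tp: "in_tpow 2 qL"
  unfolding qL_def lin_ext_glin
  by (rule in_tpow_glin) (rule in_tpow_tens'[OF in_tpow_vec in_tpow_vec], simp)

lemma C2_qL: "bilin G \<Longrightarrow> C2 G qL = C3 (\<lambda>a b c. G (mult (mult (S a) alpha) b) c) phinv"
  unfolding qL_def lin_ext_glin C2_glin by (simp add: C2_tens_vec C3_def)

lemma W_raw:
  assumes G: "bilin G"
  shows "C3 (\<lambda>x1 x2 x3. C2 (\<lambda>s1 s2. C3 (\<lambda>p1 p2 p3.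
     G (mult (S x1) (mult alpha (mult x2 (mult p1 (mult beta (mult (S p2) (S s1))))))) (mult s2 p3)) phi) (Delta x3)) phinv
   = C3 (\<lambda>f1 f2 f3. C2 (\<lambda>g1 g2. C3 (\<lambda>z1 z2 z3. C3 (\<lambda>y1 y2 y3. C2 (\<lambda>m1 m2.
     G (mult (S y1) (mult (S z1) (mult (S g1) (mult alpha (mult g2 (mult z2 (mult m1 (mult beta (mult (S m2) (mult (S z3) (S f2)))))))))))
       (mult f3 y3)) (Delta y2)) phinv) phinv) (Delta f1)) phi"
proof -
  define N where "N = (\<lambda>a b c d. G (mult (S a) (mult alpha (mult b (mult beta (S c))))) d)"
  have q: "quadlin N" unfolding N_def
    by (intro quadlinI) (simp_all add: lin_rules bi_l1[OF G] bi_l2[OF G])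
  have e: "C4 N (mulT mult (tmap [vec, vec, Delta] phinv) (tens (vec one) phi))
     = C4 N (mulT mult (tmap [Delta, vec, vec] phi) (mulT mult (tens phinv (vec one)) (tmap [vec, Delta, vec] phinv)))"
    by (simp only: key_tensor)
  have L: "C4 N (mulT mult (tmap [vec, vec, Delta] phinv) (tens (vec one) phi)) = C3 (\<lambda>x1 x2 x3. C2 (\<lambda>s1 s2. C3 (\<lambda>p1 p2 p3.
     G (mult (S x1) (mult alpha (mult x2 (mult p1 (mult beta (mult (S p2) (S s1))))))) (mult s2 p3)) phi) (Delta x3)) phinv"
    apply (simp only: C4_mulT[OF in_tpow_vvD[OF phinv_tp] in_tpow_1x[OF phi_tp] q] C4_tmap_vvD[OF phinv_tp])
    apply (simp add: C4_tens_1x N_def lin_rules bi_l1[OF G] bi_l2[OF G] assoc S_anti S_one)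
    done
  have R: "C4 N (mulT mult (tmap [Delta, vec, vec] phi) (mulT mult (tens phinv (vec one)) (tmap [vec, Delta, vec] phinv)))
    = C3 (\<lambda>f1 f2 f3. C2 (\<lambda>g1 g2. C3 (\<lambda>z1 z2 z3. C3 (\<lambda>y1 y2 y3. C2 (\<lambda>m1 m2.
     G (mult (S y1) (mult (S z1) (mult (S g1) (mult alpha (mult g2 (mult z2 (mult m1 (mult beta (mult (S m2) (mult (S z3) (S f2)))))))))))
       (mult f3 y3)) (Delta y2)) phinv) phinv) (Delta f1)) phi"
    by (simp add: C4_mulT in_tpow_mulT in_tpow_Dvv in_tpow_x1 in_tpow_vDv phi_tp phinv_tp q quadlin_iff
      quad_l1[OF q] quad_l2[OF q] quad_l3[OF q] quad_l4[OF q]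
      C4_tmap_Dvv C4_tmap_vDv C4_tens_x1 N_def lin_rules bi_l1[OF G] bi_l2[OF G] assoc S_anti S_one)
  show ?thesis using e L R by simp
qed

lemma W:
  assumes G: "bilin G"
  shows "C3 (\<lambda>x1 x2 x3. C2 (\<lambda>s1 s2. C3 (\<lambda>p1 p2 p3.
     G (mult (S x1) (mult alpha (mult x2 (mult p1 (mult beta (mult (S p2) (S s1))))))) (mult s2 p3)) phi) (Delta x3)) phinv
   = G one one"
proof -
  note lr = lin_rules bi_l1[OF G] bi_l2[OF G]
  have a: "C2 (\<lambda>g1 g2. C3 (\<lambda>z1 z2 z3. C3 (\<lambda>y1 y2 y3. C2 (\<lambda>m1 m2.
     G (mult (S y1) (mult (S z1) (mult (S g1) (mult alpha (mult g2 (mult z2 (mult m1 (mult beta (mult (S m2) (mult (S z3) (S f2)))))))))))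
       (mult f3 y3)) (Delta y2)) phinv) phinv) (Delta f1)
    = sc (eps f1) (C3 (\<lambda>z1 z2 z3. C3 (\<lambda>y1 y2 y3. C2 (\<lambda>m1 m2.
     G (mult (S y1) (mult (S z1) (mult alpha (mult z2 (mult m1 (mult beta (mult (S m2) (mult (S z3) (S f2)))))))))
       (mult f3 y3)) (Delta y2)) phinv) phinv)" for f1 f2 f3
  proof -
    have "C2 (\<lambda>g1 g2. (\<lambda>v. C3 (\<lambda>z1 z2 z3. C3 (\<lambda>y1 y2 y3. C2 (\<lambda>m1 m2.
     G (mult (S y1) (mult (S z1) (mult v (mult z2 (mult m1 (mult beta (mult (S m2) (mult (S z3) (S f2)))))))))
       (mult f3 y3)) (Delta y2)) phinv) phinv) (mult (mult (S g1) alpha) g2)) (Delta f1)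
      = sc (eps f1) ((\<lambda>v. C3 (\<lambda>z1 z2 z3. C3 (\<lambda>y1 y2 y3. C2 (\<lambda>m1 m2.
     G (mult (S y1) (mult (S z1) (mult v (mult z2 (mult m1 (mult beta (mult (S m2) (mult (S z3) (S f2)))))))))
       (mult f3 y3)) (Delta y2)) phinv) phinv) alpha)"
      by (rule ax1') (simp add: lr)
    then show ?thesis by (simp add: assoc)
  qed
  have c: "C2 (\<lambda>m1 m2. G (mult (S y1) (mult (S z1) (mult alpha (mult z2 (mult m1 (mult beta (mult (S m2) (S z3))))))))
       y3) (Delta y2) = sc (eps y2) (G (mult (S y1) (mult (S z1) (mult alpha (mult z2 (mult beta (S z3)))))) y3)" for y1 y2 y3 z1 z2 z3
  proof -
    have "C2 (\<lambda>m1 m2. (\<lambda>v. G (mult (S y1) (mult (S z1) (mult alpha (mult z2 (mult v (S z3)))))) y3)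
         (mult (mult m1 beta) (S m2))) (Delta y2)
      = sc (eps y2) ((\<lambda>v. G (mult (S y1) (mult (S z1) (mult alpha (mult z2 (mult v (S z3)))))) y3) beta)"
      by (rule ax2') (simp add: lr)
    then show ?thesis by (simp add: assoc)
  qed
  have e: "C3 (\<lambda>z1 z2 z3. G (mult (S z1) (mult alpha (mult z2 (mult beta (S z3))))) one) phinv = G one one"
  proof -
    have "C3 (\<lambda>z1 z2 z3. (\<lambda>v. G v one) (mult (mult (mult (mult (S z1) alpha) z2) beta) (S z3))) phinv = (\<lambda>v. G v one) one"
      by (rule ax4') (simp add: lr)
    then show ?thesis by (simp add: assoc)
  qed
  show ?thesis
    unfolding W_raw[OF G] a
    by (simp add: NL NMi bilin_iff lr S_one c e)
qed

lemma C32_swap: "C3 (\<lambda>a b c. C2 (\<lambda>x y. F a b c x y) t2) t1 = C2 (\<lambda>x y. C3 (\<lambda>a b c. F a b c x y) t1) t2"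
  unfolding C2_def C3_def by (rule glin_swap)

lemma E0_can_pt:
  assumes G: "bilin G"
  shows "C2 G (E0 (mulT mult (mulT mult (tprod [x, one]) qL) (Delta y))) = G x y"
proof -
  note lr = lin_rules bi_l1[OF G] bi_l2[OF G]
  have E: "C2 G (E0 (mulT mult (mulT mult (tprod [x, one]) qL) (Delta y))) =
    C3 (\<lambda>x1 x2 x3. C2 (\<lambda>y1 y2. C3 (\<lambda>p1 p2 p3. C2 (\<lambda>s1 s2. C2 (\<lambda>t1 t2.
      G (mult x (mult (S x1) (mult alpha (mult x2 (mult y1 (mult p1 (mult beta (mult (S p2) (mult (S t1) (S s1))))))))))
        (mult s2 (mult t2 p3))) (Delta y2)) (Delta x3)) phi) (Delta y)) phinv"
    unfolding E0_def
    apply (simp add: C2_commute C3_commute linear_map_C2 linear_map_id C2_tprod G)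
    apply (simp add: C2_mulT in_tpow_mulT in_tpow_tprod' qL_tp Delta_tp C2_qL bilin_iff lr
      C2_tprod Delta_mult assoc S_anti Delta_one S_one)
    done
  have sw: "C2 (\<lambda>y1 y2. C3 (\<lambda>p1 p2 p3. C2 (\<lambda>s1 s2. C2 (\<lambda>t1 t2.
      G (mult x (mult (S x1) (mult alpha (mult x2 (mult y1 (mult p1 (mult beta (mult (S p2) (mult (S t1) (S s1))))))))))
        (mult s2 (mult t2 p3))) (Delta y2)) (Delta x3)) phi) (Delta y)
    = C2 (\<lambda>s1 s2. C2 (\<lambda>y1 y2. C2 (\<lambda>t1 t2. C3 (\<lambda>p1 p2 p3.
      G (mult x (mult (S x1) (mult alpha (mult x2 (mult y1 (mult p1 (mult beta (mult (S p2) (mult (S t1) (S s1))))))))))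
        (mult s2 (mult t2 p3))) phi) (Delta y2)) (Delta y)) (Delta x3)" for x1 x2 x3
  proof -
    have "C2 (\<lambda>y1 y2. C3 (\<lambda>p1 p2 p3. C2 (\<lambda>s1 s2. C2 (\<lambda>t1 t2.
      G (mult x (mult (S x1) (mult alpha (mult x2 (mult y1 (mult p1 (mult beta (mult (S p2) (mult (S t1) (S s1))))))))))
        (mult s2 (mult t2 p3))) (Delta y2)) (Delta x3)) phi) (Delta y)
      = C2 (\<lambda>y1 y2. C2 (\<lambda>s1 s2. C2 (\<lambda>t1 t2. C3 (\<lambda>p1 p2 p3.
      G (mult x (mult (S x1) (mult alpha (mult x2 (mult y1 (mult p1 (mult beta (mult (S p2) (mult (S t1) (S s1))))))))))
        (mult s2 (mult t2 p3))) phi) (Delta y2)) (Delta x3)) (Delta y)"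
      by (simp only: C32_swap)
    also have "\<dots> = C2 (\<lambda>s1 s2. C2 (\<lambda>y1 y2. C2 (\<lambda>t1 t2. C3 (\<lambda>p1 p2 p3.
      G (mult x (mult (S x1) (mult alpha (mult x2 (mult y1 (mult p1 (mult beta (mult (S p2) (mult (S t1) (S s1))))))))))
        (mult s2 (mult t2 p3))) phi) (Delta y2)) (Delta y)) (Delta x3)"
      by (rule C2_swap)
    finally show ?thesis .
  qed
  have co: "C2 (\<lambda>y1 y2. C2 (\<lambda>t1 t2. C3 (\<lambda>p1 p2 p3.
      G (mult x (mult (S x1) (mult alpha (mult x2 (mult y1 (mult p1 (mult beta (mult (S p2) (mult (S t1) (S s1))))))))))
        (mult s2 (mult t2 p3))) phi) (Delta y2)) (Delta y)
    = C3 (\<lambda>p1 p2 p3. C2 (\<lambda>a b. C2 (\<lambda>a1 a2.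
      G (mult x (mult (S x1) (mult alpha (mult x2 (mult p1 (mult a1 (mult beta (mult (S a2) (mult (S p2) (S s1))))))))))
        (mult s2 (mult p3 b))) (Delta a)) (Delta y)) phi" for x1 x2 s1 s2
  proof -
    have t: "trilin (\<lambda>A B C. G (mult x (mult (S x1) (mult alpha (mult x2 (mult A (mult beta (mult (S B) (S s1))))))))
          (mult s2 C))"
      by (intro trilinI) (simp_all add: lr)
    show ?thesis using coassoc'[OF t, of y] by (simp add: assoc S_anti)
  qed
  have a2: "C2 (\<lambda>a1 a2.
      G (mult x (mult (S x1) (mult alpha (mult x2 (mult p1 (mult a1 (mult beta (mult (S a2) (mult (S p2) (S s1))))))))))
        (mult s2 (mult p3 b))) (Delta a)
    = sc (eps a) (G (mult x (mult (S x1) (mult alpha (mult x2 (mult p1 (mult beta (mult (S p2) (S s1))))))))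
        (mult s2 (mult p3 b)))" for x1 x2 s1 s2 p1 p2 p3 a b
  proof -
    have "C2 (\<lambda>a1 a2. (\<lambda>v. G (mult x (mult (S x1) (mult alpha (mult x2 (mult p1 (mult v (mult (S p2) (S s1))))))))
        (mult s2 (mult p3 b))) (mult (mult a1 beta) (S a2))) (Delta a)
      = sc (eps a) ((\<lambda>v. G (mult x (mult (S x1) (mult alpha (mult x2 (mult p1 (mult v (mult (S p2) (S s1))))))))
        (mult s2 (mult p3 b))) beta)"
      by (rule ax2') (simp add: lr)
    then show ?thesis by (simp add: assoc)
  qed
  have G': "bilin (\<lambda>A B. G (mult x A) (mult B y))"
    by (intro bilinI) (simp_all add: lr)
  have w: "C3 (\<lambda>x1 x2 x3. C2 (\<lambda>s1 s2. C3 (\<lambda>p1 p2 p3.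
     G (mult x (mult (S x1) (mult alpha (mult x2 (mult p1 (mult beta (mult (S p2) (S s1)))))))) (mult s2 (mult p3 y))) phi) (Delta x3)) phinv
     = G x y"
    using W[OF G'] by (simp add: assoc)
  show ?thesis
    unfolding E sw co a2
    by (simp add: counitL' lr w)
qed

end

lemma vs_sc: "vector_space (sc :: 'k::field \<Rightarrow> ('c \<Rightarrow>\<^sub>0 'k) \<Rightarrow> _)"
  by unfold_locales (simp_all add: sc_add sc_add2)

lemma fd_surj:
  fixes f :: "('c \<Rightarrow>\<^sub>0 'k::field) \<Rightarrow> ('c \<Rightarrow>\<^sub>0 'k)"
  assumes sub: "module.subspace sc V" and fT: "finite T" and VT: "V \<subseteq> module.span sc T"
    and lin: "Vector_Spaces.linear sc sc f" and fV: "f ` V \<subseteq> V" and inj: "inj_on f V" and y: "y \<in> V"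
  shows "\<exists>x\<in>V. f x = y"
proof -
  interpret VS: vector_space "sc :: 'k \<Rightarrow> ('c \<Rightarrow>\<^sub>0 'k) \<Rightarrow> _" by (rule vs_sc)
  interpret L: linear sc sc f by (rule lin)
  obtain B where B: "B \<subseteq> V" "VS.independent B" "V \<subseteq> VS.span B" "card B = VS.dim V"
    by (rule VS.basis_exists)
  have spanB: "VS.span B = V"
    using B(1,3) VS.span_minimal[OF B(1) sub] by blast
  have fB: "finite B" "card B \<le> card T"
    using VS.independent_span_bound[OF fT B(2)] B(1) VT by auto
  have injB: "inj_on f (VS.span B)" using inj spanB by simp
  have indf: "VS.independent (f ` B)"
    by (rule L.independent_injective_image[OF B(2) injB])
  have cardf: "card (f ` B) = card B"
    using card_image inj_on_subset[OF inj B(1)] by blast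
  have "V \<subseteq> VS.span (f ` B)"
  proof
    fix a assume a: "a \<in> V"
    show "a \<in> VS.span (f ` B)"
    proof (rule ccontr)
      assume na: "a \<notin> VS.span (f ` B)"
      have ind2: "VS.independent (insert a (f ` B))" using VS.independent_insertI[OF na indf] .
      have sub2: "insert a (f ` B) \<subseteq> VS.span B" using a fV B(1) spanB by blast
      have "card (insert a (f ` B)) \<le> card B"
        using VS.independent_span_bound[OF fB(1) ind2 sub2] by simp
      moreover have "a \<notin> f ` B" using na VS.span_base by blast
      then have "card (insert a (f ` B)) = card B + 1" using cardf fB(1) by simp
      ultimately show False by simp
    qed
  qed
  then have "y \<in> VS.span (f ` B)" using y by blast
  then have "y \<in> f ` VS.span B" using L.span_image by simp
  then show ?thesis using spanB by blast
qed


definition subsp :: "('c \<Rightarrow>\<^sub>0 'k::field) set \<Rightarrow> bool" where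
  "subsp V \<longleftrightarrow> 0 \<in> V \<and> (\<forall>a\<in>V. \<forall>b\<in>V. a + b \<in> V) \<and> (\<forall>c. \<forall>a\<in>V. sc c a \<in> V)"

lemma subsp_sum: "subsp V \<Longrightarrow> (\<And>i. i \<in> A \<Longrightarrow> g i \<in> V) \<Longrightarrow> sum g A \<in> V"
proof (induction A rule: infinite_finite_induct)
  case (infinite A) then show ?case by (simp add: subsp_def)
next
  case empty then show ?case by (simp add: subsp_def)
next
  case (insert x F) then show ?case by (simp add: subsp_def)
qed

lemma lspan_map:
  assumes V: "subsp V" and L: "linear_map L" and F: "\<And>f. f \<in> F \<Longrightarrow> L f \<in> V" and x: "x \<in> lspan F"
  shows "L x \<in> V"
proof -
  from x obtain m :: nat and c f where x: "x = (\<Sum>i<m. sc (c i) (f i))" and f: "\<forall>i<m. f i \<in> F"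
    unfolding lspan_def by blast
  have "L x = (\<Sum>i<m. sc (c i) (L (f i)))" unfolding x by (simp add: linear_map_sum[OF L] linear_map_sc[OF L])
  also have "\<dots> \<in> V" using V F f by (intro subsp_sum) (auto simp: subsp_def)
  finally show ?thesis .
qed

lemma sum_lessThan_split: "(\<Sum>i<m1 + (m2::nat). g i) = (\<Sum>i<m1. g i) + (\<Sum>i<m2. g (m1 + i))"
  by (induction m2) (simp_all add: add_ac)

lemma subsp_lspan: "subsp (lspan F)"
  unfolding subsp_def
proof (intro conjI ballI allI)
  show "0 \<in> lspan F" unfolding lspan_def by (rule CollectI, rule exI[of _ 0]) simp
next
  fix a b assume a: "a \<in> lspan F" and b: "b \<in> lspan F"
  from a obtain m1 :: nat and c1 f1 where a: "a = (\<Sum>i<m1. sc (c1 i) (f1 i))" "\<forall>i<m1. f1 i \<in> F" unfolding lspan_def by blast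
  from b obtain m2 :: nat and c2 f2 where b: "b = (\<Sum>i<m2. sc (c2 i) (f2 i))" "\<forall>i<m2. f2 i \<in> F" unfolding lspan_def by blast
  define c where "c i = (if i < m1 then c1 i else c2 (i - m1))" for i
  define f where "f i = (if i < m1 then f1 i else f2 (i - m1))" for i
  have "a + b = (\<Sum>i<m1 + m2. sc (c i) (f i))"
    unfolding sum_lessThan_split a b c_def f_def by simp
  moreover have "\<forall>i<m1+m2. f i \<in> F" using a b unfolding f_def by auto
  ultimately show "a + b \<in> lspan F" unfolding lspan_def by blast
next
  fix k a assume a: "a \<in> lspan F"
  from a obtain m :: nat and c f where a: "a = (\<Sum>i<m. sc (c i) (f i))" "\<forall>i<m. f i \<in> F" unfolding lspan_def by blast
  have "sc k a = (\<Sum>i<m. sc (k * c i) (f i))" unfolding a(1) by (simp add: sc_sum)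
  then show "sc k a \<in> lspan F"
    apply (simp only: lspan_def mem_Collect_eq)
    apply (rule exI[of _ m], rule exI[of _ "\<lambda>i. k * c i"], rule exI[of _ f])
    using a(2) by simp
qed

lemma lspan_gen: "f \<in> F \<Longrightarrow> f \<in> lspan F"
  unfolding lspan_def by (rule CollectI, rule exI[of _ 1], rule exI[of _ "\<lambda>_. 1"], rule exI[of _ "\<lambda>_. f"]) simp

lemma subsp_in_tpow: "subsp {x. in_tpow n x}"
  by (simp add: subsp_def in_tpow_zero in_tpow_add in_tpow_sc)

lemma tpow2_gen: "a \<in> K \<Longrightarrow> b \<in> K \<Longrightarrow> tprod [a, b] \<in> tpow K 2"
  unfolding tpow_def by (rule lspan_gen) auto

lemma subsp_tpow: "subsp (tpow K n)"
  unfolding tpow_def by (rule subsp_lspan)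

lemma in_tpow_tprod_len: "length as = n \<Longrightarrow> in_tpow n (tprod as)"
  using in_tpow_tprod by blast

lemma tpow2_in_tpow: "z \<in> tpow K 2 \<Longrightarrow> in_tpow 2 z"
  using lspan_map[OF subsp_in_tpow[of 2] linear_map_id, of "{tprod as |as. set as \<subseteq> K \<and> length as = 2}" z]
  unfolding tpow_def by (auto intro: in_tpow_tprod_len)

lemma C2_closure:
  assumes V: "subsp V" and F: "bilin F" and FV: "\<And>a b. a \<in> K \<Longrightarrow> b \<in> K \<Longrightarrow> F a b \<in> V"
    and z: "z \<in> tpow K 2"
  shows "C2 F z \<in> V"
proof -
  have lin: "linear_map (C2 F)" using linear_map_C2[OF linear_map_id, of F] by simp
  have gen: "C2 F f \<in> V" if "f \<in> {tprod as |as. set as \<subseteq> K \<and> length as = 2}" for f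
  proof -
    from that obtain as where f: "f = tprod as" "set as \<subseteq> K" "length as = 2" by blast
    from f(3) obtain a b where ab: "as = [a, b]" by (rule len2E)
    show "C2 F f \<in> V" using f ab C2_tprod[OF F] FV by simp
  qed
  show ?thesis by (rule lspan_map[OF V lin gen z[unfolded tpow_def]])
qed

lemma bilin_tprod2: "bilin (\<lambda>a b. tprod [a, b])"
  by (intro bilinI) (simp_all add: linear_map_tprod1 linear_map_tprod2 linear_map_id)

lemma tens_eqI2:
  fixes X Y :: "('b, 'k::field) tens"
  assumes "in_tpow 2 X" "in_tpow 2 Y"
    and "\<And>N :: ('b,'k) hvec \<Rightarrow> ('b,'k) hvec \<Rightarrow> ('b,'k) tens. bilin N \<Longrightarrow> C2 N X = C2 N Y"
  shows "X = Y"
proof -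
  have "X = C2 (\<lambda>a b. tprod [a, b]) X" by (rule ident2[OF assms(1), symmetric])
  also have "\<dots> = C2 (\<lambda>a b. tprod [a, b]) Y" by (rule assms(3)[OF bilin_tprod2])
  also have "\<dots> = Y" by (rule ident2[OF assms(2)])
  finally show ?thesis .
qed

lemma in_tpow_C2: "(\<And>a b. in_tpow n (F a b)) \<Longrightarrow> in_tpow n (C2 F z)"
  unfolding C2_def by (rule in_tpow_glin)
lemma in_tpow_C3: "(\<And>a b c. in_tpow n (F a b c)) \<Longrightarrow> in_tpow n (C3 F z)"
  unfolding C3_def by (rule in_tpow_glin)


context QH begin

lemma subsp_K: "subsp K"
  by (simp add: subsp_def K0 Kadd Ksc)

lemma qL_K: "qL \<in> tpow K 2"
  using hyp by (simp add: qL_def)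

lemma mulT_tpow2:
  assumes z1: "z1 \<in> tpow K 2" and z2: "z2 \<in> tpow K 2"
  shows "mulT mult z1 z2 \<in> tpow K 2"
proof -
  have t1: "in_tpow 2 z1" "in_tpow 2 z2" using z1 z2 by (simp_all add: tpow2_in_tpow)
  have "mulT mult z1 z2 = C2 (\<lambda>a b. tprod [a, b]) (mulT mult z1 z2)"
    by (rule ident2[symmetric]) (rule in_tpow_mulT[OF t1])
  also have "\<dots> = C2 (\<lambda>a b. C2 (\<lambda>a' b'. tprod [mult a a', mult b b']) z2) z1"
    by (rule C2_mulT[OF t1 bilin_tprod2])
  also have "\<dots> \<in> tpow K 2"
  proof (rule C2_closure[OF subsp_tpow _ _ z1])
    show "bilin (\<lambda>a b. C2 (\<lambda>a' b'. tprod [mult a a', mult b b']) z2)"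
      by (intro bilinI) (simp_all add: lin_rules)
    fix a b assume ab: "a \<in> K" "b \<in> K"
    show "C2 (\<lambda>a' b'. tprod [mult a a', mult b b']) z2 \<in> tpow K 2"
      by (rule C2_closure[OF subsp_tpow _ _ z2]) (simp_all add: bilin_iff lin_rules tpow2_gen Kmult ab)
  qed
  finally show ?thesis .
qed

lemma bilin_M: "bilin (\<lambda>x y. mulT mult (mulT mult (tprod [x, one]) qL) (Delta y))"
  by (intro bilinI) (simp_all add: lin_rules)

lemma can_tpow: "w \<in> tpow K 2 \<Longrightarrow> can w \<in> tpow K 2"
  unfolding can_def
  by (rule C2_closure[OF subsp_tpow bilin_M])
     (intro mulT_tpow2 tpow2_gen Kone qL_K KDelta; assumption)

lemma E0_eq: "E0 = C2 (\<lambda>a b. C3 (\<lambda>p1 p2 p3. C2 (\<lambda>b1 b2. tprod [mult (mult (mult (mult a p1) beta) (S p2)) (S b1), mult b2 p3]) (Delta b)) phi)"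
  by (rule ext) (simp add: E0_def)

lemma E0_lin: "linear_map E0"
  by (rule linear_mapI) (simp_all add: E0_def C2_def glin_add glin_sc)

lemma in_tpow_E0: "in_tpow 2 (E0 z)"
  unfolding E0_def
  by (intro in_tpow_C2 in_tpow_C3 in_tpow_tprod_len) simp

lemma E0_M: "E0 (mulT mult (mulT mult (tprod [x, one]) qL) (Delta y)) = tprod [x, y]"
proof (rule tens_eqI2[OF in_tpow_E0 in_tpow_tprod_len])
  show "length [x, y] = 2" by simp
  fix N :: "('b,'k) hvec \<Rightarrow> ('b,'k) hvec \<Rightarrow> ('b,'k) tens" assume N: "bilin N"
  show "C2 N (E0 (mulT mult (mulT mult (tprod [x, one]) qL) (Delta y))) = C2 N (tprod [x, y])"
    by (simp only: E0_can_pt[OF N] C2_tprod[OF N])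
qed

lemma E0_can: "in_tpow 2 w \<Longrightarrow> E0 (can w) = w"
  unfolding can_def C2_commute[OF E0_lin] E0_M by (rule ident2)

lemma can_lin: "linear_map can"
  by (rule linear_mapI) (simp_all add: can_def C2_def glin_add glin_sc)

lemma fd_tpow2: "\<exists>T. finite T \<and> tpow K 2 \<subseteq> module.span sc T"
proof -
  interpret VS: vector_space "sc :: 'k \<Rightarrow> ('b list \<Rightarrow>\<^sub>0 'k) \<Rightarrow> _" by (rule vs_sc)
  obtain F0 where F0: "finite F0" "K \<subseteq> lspan F0" using fd unfolding finite_dimensional_def by blast
  define T where "T = (\<lambda>(f, g). tprod [f, g]) ` (F0 \<times> F0)"
  have fT: "finite T" unfolding T_def using F0(1) by simp
  have sT: "subsp (VS.span T)"
    by (simp add: subsp_def VS.span_zero VS.span_add VS.span_scale)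
  have gen: "tprod [a, b] \<in> VS.span T" if a: "a \<in> K" and b: "b \<in> K" for a b
  proof -
    have "(\<lambda>a. tprod [a, b]) a \<in> VS.span T"
    proof (rule lspan_map[OF sT, where L="\<lambda>a. tprod [a, b]" and F=F0 and x=a])
      show "linear_map (\<lambda>a. tprod [a, b])" by (simp add: lin_rules)
      show "a \<in> lspan F0" using a F0(2) by blast
      fix f assume f: "f \<in> F0"
      have "(\<lambda>b. tprod [f, b]) b \<in> VS.span T"
      proof (rule lspan_map[OF sT, where L="\<lambda>b. tprod [f, b]" and F=F0 and x=b])
        show "linear_map (\<lambda>b. tprod [f, b])" by (simp add: lin_rules)
        show "b \<in> lspan F0" using b F0(2) by blast
        fix g assume g: "g \<in> F0"
        have "tprod [f, g] \<in> T" unfolding T_def using f g by force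
        then show "tprod [f, g] \<in> VS.span T" by (rule VS.span_base)
      qed
      then show "tprod [f, b] \<in> VS.span T" by simp
    qed
    then show ?thesis by simp
  qed
  have "tpow K 2 \<subseteq> VS.span T"
  proof
    fix z assume z: "z \<in> tpow K 2"
    have "id z \<in> VS.span T"
    proof (rule lspan_map[OF sT _ _ z[unfolded tpow_def]])
      show "linear_map id" by (simp add: linear_map_def)
      fix f assume "f \<in> {tprod as |as. set as \<subseteq> K \<and> length as = 2}"
      then obtain as where f: "f = tprod as" "set as \<subseteq> K" "length as = 2" by blast
      from f(3) obtain a b where ab: "as = [a, b]" by (rule len2E)
      show "id f \<in> VS.span T" using f ab gen by simp
    qed
    then show "z \<in> VS.span T" by simp
  qed
  then show ?thesis using fT by blast
qed

lemma E0_pres: "z \<in> tpow K 2 \<Longrightarrow> E0 z \<in> tpow K 2"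
proof -
  assume z: "z \<in> tpow K 2"
  interpret VS: vector_space "sc :: 'k \<Rightarrow> ('b list \<Rightarrow>\<^sub>0 'k) \<Rightarrow> _" by (rule vs_sc)
  obtain T where T: "finite T" "tpow K 2 \<subseteq> VS.span T" using fd_tpow2 by blast
  have sub: "VS.subspace (tpow K 2)"
    using subsp_tpow[of K 2] by (simp add: subsp_def VS.subspace_def)
  have lin: "Vector_Spaces.linear sc sc can"
    using can_lin vs_sc by (simp add: Vector_Spaces.linear_iff linear_map_def)
  have inj: "inj_on can (tpow K 2)"
  proof
    fix w1 w2 assume w: "w1 \<in> tpow K 2" "w2 \<in> tpow K 2" "can w1 = can w2"
    have "w1 = E0 (can w1)" using E0_can[OF tpow2_in_tpow[OF w(1)]] by simp
    also have "\<dots> = E0 (can w2)" using w(3) by simp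
    also have "\<dots> = w2" using E0_can[OF tpow2_in_tpow[OF w(2)]] by simp
    finally show "w1 = w2" .
  qed
  obtain w where w: "w \<in> tpow K 2" "can w = z"
    using fd_surj[OF sub T(1) T(2) lin _ inj z] can_tpow by blast
  then show ?thesis using E0_can[OF tpow2_in_tpow[OF w(1)]] by simp
qed

lemma betaS_K: "h \<in> K \<Longrightarrow> mult beta (S h) \<in> K"
proof -
  assume h: "h \<in> K"
  have "C2 (\<lambda>a b. sc (eps b) a) (E0 (tprod [one, h])) \<in> K"
    by (rule C2_closure[OF subsp_K _ _ E0_pres[OF tpow2_gen[OF Kone h]]])
       (simp_all add: bilin_iff lin_rules Ksc)
  moreover have "C2 (\<lambda>a b. sc (eps b) a) (E0 (tprod [one, h])) = mult beta (S h)"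
    unfolding E0_def
    by (simp del: sc_sc add: C2_tprod bilin_iff lin_rules C2_commute C3_commute linear_map_C2 linear_map_id
      eps_mult sc_split sc_outs counitR' NR S_one)
  ultimately show ?thesis by simp
qed

lemma beta_K: "beta \<in> K"
  using betaS_K[OF Kone] by (simp add: S_one)

lemma S_K: "h \<in> K \<Longrightarrow> S h \<in> K"
proof -
  assume h: "h \<in> K"
  have "C2 (\<lambda>a b. mult a (mult beta (S (mult h b)))) qL \<in> K"
    by (rule C2_closure[OF subsp_K _ _ qL_K]) (simp_all add: bilin_iff lin_rules Kmult betaS_K h)
  moreover have "C2 (\<lambda>a b. mult a (mult beta (S (mult h b)))) qL = S h"
  proof -
    have "C2 (\<lambda>a b. mult a (mult beta (S (mult h b)))) qL
        = C3 (\<lambda>a b c. mult (mult (mult (S a) alpha) b) (mult beta (S (mult h c)))) phinv"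
      by (rule C2_qL) (simp add: bilin_iff lin_rules)
    also have "\<dots> = C3 (\<lambda>a b c. (\<lambda>v. mult v (S h)) (mult (mult (mult (mult (S a) alpha) b) beta) (S c))) phinv"
      by (simp add: assoc S_anti)
    also have "\<dots> = mult one (S h)"
      by (rule ax4') (simp add: lin_rules)
    finally show ?thesis by simp
  qed
  ultimately show ?thesis by simp
qed

lemma alpha_K: "alpha \<in> K"
proof -
  have "C2 (\<lambda>a b. sc (eps b) a) qL \<in> K"
    by (rule C2_closure[OF subsp_K _ _ qL_K]) (simp_all add: bilin_iff lin_rules Ksc)
  moreover have "C2 (\<lambda>a b. sc (eps b) a) qL = alpha"
  proof -
    have "C2 (\<lambda>a b. sc (eps b) a) qL = C3 (\<lambda>a b c. sc (eps c) (mult (mult (S a) alpha) b)) phinv"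
      by (rule C2_qL) (simp add: bilin_iff lin_rules)
    also have "\<dots> = mult (mult (S one) alpha) one"
      by (rule NRi) (simp add: bilin_iff lin_rules)
    finally show ?thesis by (simp add: S_one)
  qed
  ultimately show ?thesis by simp
qed

end

theorem proposition2p3:
  fixes mult :: "('b,'k::field) hvec \<Rightarrow> ('b,'k) hvec \<Rightarrow> ('b,'k) hvec"
    and one :: "('b,'k) hvec"
    and Delta :: "('b,'k) hvec \<Rightarrow> ('b,'k) tens"
    and eps :: "('b,'k) hvec \<Rightarrow> 'k"
    and phi phinv :: "('b,'k) tens"
    and S :: "('b,'k) hvec \<Rightarrow> ('b,'k) hvec"
    and alpha beta :: "('b,'k) hvec"
    and K :: "('b,'k) hvec set"
  assumes "quasi_hopf mult one Delta eps phi phinv S alpha beta"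
    and "subquasibialgebra mult one Delta phi K"
    and "finite_dimensional K"
    and "lin_ext (\<lambda>u. tens (vec (mult (mult (S (bv (u!0))) alpha) (bv (u!1)))) (vec (bv (u!2)))) phinv
           \<in> tpow K 2"
  shows "alpha \<in> K \<and> beta \<in> K \<and> S ` K \<subseteq> K"
proof -
  interpret QH mult one Delta eps phi phinv S alpha beta K
    using assms by unfold_locales
  show ?thesis using alpha_K beta_K S_K by blast
qed


end
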